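(* Let $\mathcal E$ be a product system and let $F^1,F^2$ be inclusion subsystems of $\mathcal E$. For $t>0$ let $$G_t=\overline{\mathrm{span}}\{x\otimes y:x\in\mathcal E_r\ominus F^1_r,\ y\in\mathcal E_{t-r}\ominus F^2_{t-r}\ \text{for some }0<r<t\}$$ and $G'_t=\mathcal E_t\ominus G_t$. Then $G'=(G'_t)_{t>0}$ is an inclusion subsystem of $\mathcal E$ (i.e. $G'_{s+t}\subset G'_s\otimes G'_t$ under $\mathcal E_{s+t}\cong\mathcal E_s\otimes\mathcal E_t$) and $F^1_t\subset G'_t$, $F^2_t\subset G'_t$ for all $t>0$.
   Context: A product system is a measurable family of separable Hilbert spaces $(\mathcal E_t)_{t>0}$ with associative unitaries $V_{s,t}:\mathcal E_{s+t}\to\mathcal E_s\otimes\mathcal E_t$, used to identify $\mathcal E_{s+t}\cong\mathcal E_s\otimes\mathcal E_t$. An inclusion subsystem is a family of closed subspaces $F_t\subset\mathcal E_t$ with $V_{s,t}(F_{s+t})\subset F_s\otimes F_t$ for all $s,t>0$; with the restricted maps it is an inclusion system (family of Hilbert spaces with associative isometries $E_{s+t}\to E_s\otimes E_t$). *)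

theory Defs
  imports "HOL-Analysis.Analysis"
begin

text \<open>Separable complex Hilbert spaces are modelled concretely as l2(I) for a countable
index set I (every separable Hilbert space is unitarily equivalent to such a space).
The Hilbert tensor product l2(I) (x) l2(J) is l2(I x J) with x (x) y = (a,b) |-> x a * y b.\<close>

definition l2 :: "'i set \<Rightarrow> ('i \<Rightarrow> complex) set" where
  "l2 I = {f. (\<forall>a. a \<notin> I \<longrightarrow> f a = 0) \<and> (\<lambda>a. (cmod (f a))^2) summable_on I}"

definition l2_inner :: "('i \<Rightarrow> complex) \<Rightarrow> ('i \<Rightarrow> complex) \<Rightarrow> complex" where
  "l2_inner f g = (\<Sum>\<^sub>\<infinity>a. f a * cnj (g a))"

definition l2_norm :: "('i \<Rightarrow> complex) \<Rightarrow> real" where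
  "l2_norm f = sqrt (\<Sum>\<^sub>\<infinity>a. (cmod (f a))^2)"

definition l2_closure :: "'i set \<Rightarrow> ('i \<Rightarrow> complex) set \<Rightarrow> ('i \<Rightarrow> complex) set" where
  "l2_closure I S = {x \<in> l2 I. \<exists>u. (\<forall>n. u n \<in> S) \<and>
      (\<lambda>n. l2_norm (\<lambda>a. u n a - x a)) \<longlonglongrightarrow> 0}"

definition cspan :: "('i \<Rightarrow> complex) set \<Rightarrow> ('i \<Rightarrow> complex) set" where
  "cspan S = {x. \<exists>(n::nat) (c::nat \<Rightarrow> complex) v. (\<forall>i<n. v i \<in> S) \<and>
      x = (\<lambda>a. \<Sum>i<n. c i * v i a)}"

definition cl_span :: "'i set \<Rightarrow> ('i \<Rightarrow> complex) set \<Rightarrow> ('i \<Rightarrow> complex) set" where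
  "cl_span I S = l2_closure I (cspan S)"

definition closed_subspace :: "'i set \<Rightarrow> ('i \<Rightarrow> complex) set \<Rightarrow> bool" where
  "closed_subspace I F \<longleftrightarrow> F \<subseteq> l2 I \<and> (\<lambda>a. 0) \<in> F \<and>
     (\<forall>x\<in>F. \<forall>y\<in>F. (\<lambda>a. x a + y a) \<in> F) \<and>
     (\<forall>c. \<forall>x\<in>F. (\<lambda>a. c * x a) \<in> F) \<and> l2_closure I F \<subseteq> F"

definition orth :: "'i set \<Rightarrow> ('i \<Rightarrow> complex) set \<Rightarrow> ('i \<Rightarrow> complex) set" where
  "orth I F = {x \<in> l2 I. \<forall>y\<in>F. l2_inner x y = 0}"

definition tensor :: "('i \<Rightarrow> complex) \<Rightarrow> ('j \<Rightarrow> complex) \<Rightarrow> ('i \<times> 'j \<Rightarrow> complex)" where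
  "tensor x y = (\<lambda>(a, b). x a * y b)"

definition htensor :: "'i set \<Rightarrow> 'j set \<Rightarrow> ('i \<Rightarrow> complex) set \<Rightarrow> ('j \<Rightarrow> complex) set
    \<Rightarrow> ('i \<times> 'j \<Rightarrow> complex) set" where
  "htensor I J A B = cl_span (I \<times> J) {tensor x y | x y. x \<in> A \<and> y \<in> B}"

definition unitary_l2 :: "'i set \<Rightarrow> 'j set \<Rightarrow> (('i \<Rightarrow> complex) \<Rightarrow> ('j \<Rightarrow> complex)) \<Rightarrow> bool" where
  "unitary_l2 I J U \<longleftrightarrow> U ` l2 I = l2 J \<and>
     (\<forall>x\<in>l2 I. \<forall>y\<in>l2 I. U (\<lambda>a. x a + y a) = (\<lambda>b. U x b + U y b)) \<and>
     (\<forall>c. \<forall>x\<in>l2 I. U (\<lambda>a. c * x a) = (\<lambda>b. c * U x b)) \<and>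
     (\<forall>x\<in>l2 I. \<forall>y\<in>l2 I. l2_inner (U x) (U y) = l2_inner x y)"

text \<open>U (x) 1 and 1 (x) U acting on l2(I x K) resp. l2(K x I).\<close>
definition op_tensor_id :: "(('i \<Rightarrow> complex) \<Rightarrow> ('j \<Rightarrow> complex)) \<Rightarrow> ('i \<times> 'k \<Rightarrow> complex)
    \<Rightarrow> ('j \<times> 'k \<Rightarrow> complex)" where
  "op_tensor_id U f = (\<lambda>(p, c). U (\<lambda>a. f (a, c)) p)"

definition id_tensor_op :: "(('i \<Rightarrow> complex) \<Rightarrow> ('j \<Rightarrow> complex)) \<Rightarrow> ('k \<times> 'i \<Rightarrow> complex)
    \<Rightarrow> ('k \<times> 'j \<Rightarrow> complex)" where
  "id_tensor_op U f = (\<lambda>(a, q). U (\<lambda>b. f (a, b)) q)"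

text \<open>Product system: E t = index set of the Hilbert space l2(E t), V s t : E_(s+t) \<rightarrow> E_s (x) E_t unitary,
associative. (The measurable structure is not modelled.)\<close>
definition product_system :: "(real \<Rightarrow> 'i::countable set)
    \<Rightarrow> (real \<Rightarrow> real \<Rightarrow> ('i \<Rightarrow> complex) \<Rightarrow> ('i \<times> 'i \<Rightarrow> complex)) \<Rightarrow> bool" where
  "product_system E V \<longleftrightarrow>
     (\<forall>s>0. \<forall>t>0. unitary_l2 (E (s + t)) (E s \<times> E t) (V s t)) \<and>
     (\<forall>r>0. \<forall>s>0. \<forall>t>0. \<forall>x\<in>l2 (E (r + s + t)). \<forall>a b c.
        op_tensor_id (V r s) (V (r + s) t x) ((a, b), c) =
        id_tensor_op (V s t) (V r (s + t) x) (a, (b, c)))"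

definition inclusion_subsystem :: "(real \<Rightarrow> 'i::countable set)
    \<Rightarrow> (real \<Rightarrow> real \<Rightarrow> ('i \<Rightarrow> complex) \<Rightarrow> ('i \<times> 'i \<Rightarrow> complex))
    \<Rightarrow> (real \<Rightarrow> ('i \<Rightarrow> complex) set) \<Rightarrow> bool" where
  "inclusion_subsystem E V F \<longleftrightarrow>
     (\<forall>t>0. closed_subspace (E t) (F t)) \<and>
     (\<forall>s>0. \<forall>t>0. V s t ` F (s + t) \<subseteq> htensor (E s) (E t) (F s) (F t))"

end

theory Submission
  imports Defs
begin

no_notation Infinite_Set_Sum.abs_summable_on (infix "abs'_summable'_on" 50)
notation Infinite_Sum.abs_summable_on (infixr "abs'_summable'_on" 46)

definition sqs :: "('a \<Rightarrow> complex) \<Rightarrow> bool" where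
  "sqs f \<longleftrightarrow> (\<lambda>a. (cmod (f a))^2) summable_on UNIV"

lemma sqs_real_abs: "sqs f \<Longrightarrow> (\<lambda>a. (cmod (f a))^2) abs_summable_on UNIV"
  unfolding sqs_def by simp

lemma sqs_zero[simp]: "sqs (\<lambda>a. 0)"
  by (simp add: sqs_def)

lemma sqs_add:
  assumes "sqs f" "sqs g" shows "sqs (\<lambda>a. f a + g a)"
proof -
  have "(\<lambda>a. 2 * (cmod (f a))^2 + 2 * (cmod (g a))^2) summable_on UNIV"
    using assms unfolding sqs_def by (intro summable_on_add summable_on_cmult_right) auto
  hence s: "(\<lambda>a. 2 * (cmod (f a))^2 + 2 * (cmod (g a))^2) abs_summable_on UNIV"
    by simp
  have le: "norm ((cmod (f a + g a))^2) \<le> norm (2 * (cmod (f a))^2 + 2 * (cmod (g a))^2)" for a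
  proof -
    have "cmod (f a + g a) \<le> cmod (f a) + cmod (g a)" by (rule norm_triangle_ineq)
    hence "(cmod (f a + g a))^2 \<le> (cmod (f a) + cmod (g a))^2"
      by (rule power_mono) simp
    also have "\<dots> \<le> 2 * (cmod (f a))^2 + 2 * (cmod (g a))^2"
    proof -
      have "0 \<le> (cmod (f a) - cmod (g a))^2" by simp
      thus ?thesis by (simp add: power2_eq_square algebra_simps)
    qed
    finally show ?thesis by simp
  qed
  show ?thesis unfolding sqs_def
    using Infinite_Sum.abs_summable_on_comparison_test[OF s le] by simp
qed

lemma sqs_scale:
  assumes "sqs f" shows "sqs (\<lambda>a. c * f a)"
  using summable_on_cmult_right[OF assms[unfolded sqs_def], of "(cmod c)^2"]
  unfolding sqs_def by (simp add: norm_mult power_mult_distrib)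

lemma sqs_minus:
  assumes "sqs f" "sqs g" shows "sqs (\<lambda>a. f a - g a)"
  using sqs_add[OF assms(1) sqs_scale[OF assms(2), of "-1"]] by simp

lemma sqs_prod_abs:
  assumes "sqs f" "sqs g" shows "(\<lambda>a. f a * cnj (g a)) abs_summable_on UNIV"
proof (rule Infinite_Sum.abs_summable_product)
  show "(\<lambda>i. f i * f i) abs_summable_on UNIV"
    using sqs_real_abs[OF assms(1)] by (simp add: norm_mult power2_eq_square)
  show "(\<lambda>i. cnj (g i) * cnj (g i)) abs_summable_on UNIV"
    using sqs_real_abs[OF assms(2)] by (simp add: norm_mult power2_eq_square)
qed

lemma sqs_prod:
  assumes "sqs f" "sqs g" shows "(\<lambda>a. f a * cnj (g a)) summable_on UNIV"
  using Infinite_Sum.abs_summable_summable[OF sqs_prod_abs[OF assms]] .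

lemma l2_UNIV: "f \<in> l2 UNIV \<longleftrightarrow> sqs f"
  by (simp add: l2_def sqs_def)

lemma l2_sqs: "f \<in> l2 I \<Longrightarrow> sqs f"
proof -
  assume f: "f \<in> l2 I"
  hence "(\<lambda>a. (cmod (f a))^2) summable_on I" by (simp add: l2_def)
  moreover have "(\<lambda>a. (cmod (f a))^2) summable_on UNIV \<longleftrightarrow> (\<lambda>a. (cmod (f a))^2) summable_on I"
    using f by (intro summable_on_cong_neutral) (auto simp: l2_def)
  ultimately show ?thesis by (simp add: sqs_def)
qed

lemma l2_iff: "f \<in> l2 I \<longleftrightarrow> sqs f \<and> (\<forall>a. a \<notin> I \<longrightarrow> f a = 0)"
proof
  assume "f \<in> l2 I" thus "sqs f \<and> (\<forall>a. a \<notin> I \<longrightarrow> f a = 0)" using l2_sqs by (auto simp: l2_def)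
next
  assume h: "sqs f \<and> (\<forall>a. a \<notin> I \<longrightarrow> f a = 0)"
  have "(\<lambda>a. (cmod (f a))^2) summable_on UNIV \<longleftrightarrow> (\<lambda>a. (cmod (f a))^2) summable_on I"
    using h by (intro summable_on_cong_neutral) auto
  thus "f \<in> l2 I" using h by (simp add: l2_def sqs_def)
qed

lemma l2_add: "f \<in> l2 I \<Longrightarrow> g \<in> l2 I \<Longrightarrow> (\<lambda>a. f a + g a) \<in> l2 I"
  by (simp add: l2_iff sqs_add)
lemma l2_scale: "f \<in> l2 I \<Longrightarrow> (\<lambda>a. c * f a) \<in> l2 I"
  by (simp add: l2_iff sqs_scale)
lemma l2_minus: "f \<in> l2 I \<Longrightarrow> g \<in> l2 I \<Longrightarrow> (\<lambda>a. f a - g a) \<in> l2 I"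
  by (simp add: l2_iff sqs_minus)
lemma l2_zero: "(\<lambda>a. 0) \<in> l2 I"
  by (simp add: l2_iff)

lemma l2_inner_add_left:
  "sqs f \<Longrightarrow> sqs g \<Longrightarrow> sqs h \<Longrightarrow> l2_inner (\<lambda>a. f a + g a) h = l2_inner f h + l2_inner g h"
  unfolding l2_inner_def using sqs_prod[of f h] sqs_prod[of g h]
  by (simp add: distrib_right infsum_add)

lemma l2_inner_cnj: "l2_inner g f = cnj (l2_inner f g)"
  unfolding l2_inner_def by (simp flip: infsum_cnj add: mult.commute)

lemma l2_inner_add_right:
  "sqs f \<Longrightarrow> sqs g \<Longrightarrow> sqs h \<Longrightarrow> l2_inner h (\<lambda>a. f a + g a) = l2_inner h f + l2_inner h g"
  by (metis (no_types) l2_inner_cnj l2_inner_add_left complex_cnj_add)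

lemma l2_inner_scale_left:
  "l2_inner (\<lambda>a. c * f a) g = c * l2_inner f g"
proof -
  have "l2_inner (\<lambda>a. c * f a) g = (\<Sum>\<^sub>\<infinity>a. c * (f a * cnj (g a)))"
    unfolding l2_inner_def by (simp add: mult.assoc)
  also have "\<dots> = c * l2_inner f g"
  proof (cases "c = 0")
    case True thus ?thesis by simp
  next
    case False
    show ?thesis
    proof (cases "(\<lambda>a. f a * cnj (g a)) summable_on UNIV")
      case True thus ?thesis unfolding l2_inner_def by (simp add: infsum_cmult_right)
    next
      case ns: False
      have "\<not> (\<lambda>a. c * (f a * cnj (g a))) summable_on UNIV"
      proof
        assume "(\<lambda>a. c * (f a * cnj (g a))) summable_on UNIV"
        hence "(\<lambda>a. inverse c * (c * (f a * cnj (g a)))) summable_on UNIV"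
          by (rule summable_on_cmult_right)
        moreover have "(\<lambda>a. inverse c * (c * (f a * cnj (g a)))) = (\<lambda>a. f a * cnj (g a))"
          using False by (simp add: fun_eq_iff)
        ultimately show False using ns by simp
      qed
      thus ?thesis using ns unfolding l2_inner_def by (simp add: infsum_not_exists)
    qed
  qed
  finally show ?thesis .
qed

lemma l2_inner_scale_right:
  "l2_inner g (\<lambda>a. c * f a) = cnj c * l2_inner g f"
  by (metis (no_types) l2_inner_cnj l2_inner_scale_left complex_cnj_mult)

lemma l2_inner_minus_left:
  "sqs f \<Longrightarrow> sqs g \<Longrightarrow> sqs h \<Longrightarrow> l2_inner (\<lambda>a. f a - g a) h = l2_inner f h - l2_inner g h"
  using l2_inner_add_left[of f "\<lambda>a. (-1) * g a" h] l2_inner_scale_left[of "-1" g h] sqs_scale[of g "-1"]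
  by simp

lemma l2_inner_minus_right:
  "sqs f \<Longrightarrow> sqs g \<Longrightarrow> sqs h \<Longrightarrow> l2_inner h (\<lambda>a. f a - g a) = l2_inner h f - l2_inner h g"
  by (metis (no_types) l2_inner_cnj l2_inner_minus_left complex_cnj_diff)

lemma l2_inner_self: "sqs f \<Longrightarrow> l2_inner f f = of_real (\<Sum>\<^sub>\<infinity>a. (cmod (f a))^2)"
proof -
  assume f: "sqs f"
  have "l2_inner f f = (\<Sum>\<^sub>\<infinity>a. of_real ((cmod (f a))^2))"
    unfolding l2_inner_def complex_norm_square by simp
  also have "\<dots> = of_real (\<Sum>\<^sub>\<infinity>a. (cmod (f a))^2)"
    using f unfolding sqs_def
    by (metis has_sum_of_real has_sum_infsum infsumI)
  finally show ?thesis .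
qed

typedef 'a ell2 = "{f::'a \<Rightarrow> complex. sqs f}" morphisms vec mk
  by (rule exI[of _ "\<lambda>_. 0"]) simp

setup_lifting type_definition_ell2

instantiation ell2 :: (type) real_vector
begin
lift_definition zero_ell2 :: "'a ell2" is "\<lambda>_. 0" by simp
lift_definition plus_ell2 :: "'a ell2 \<Rightarrow> 'a ell2 \<Rightarrow> 'a ell2" is "\<lambda>f g a. f a + g a"
  by (simp add: sqs_add)
lift_definition minus_ell2 :: "'a ell2 \<Rightarrow> 'a ell2 \<Rightarrow> 'a ell2" is "\<lambda>f g a. f a - g a"
  by (simp add: sqs_minus)
lift_definition uminus_ell2 :: "'a ell2 \<Rightarrow> 'a ell2" is "\<lambda>f a. - f a"
  using sqs_scale[of _ "-1"] by simp
lift_definition scaleR_ell2 :: "real \<Rightarrow> 'a ell2 \<Rightarrow> 'a ell2" is "\<lambda>r f a. complex_of_real r * f a"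
  by (simp add: sqs_scale)
instance
  by intro_classes (transfer; simp add: fun_eq_iff algebra_simps)+
end

lift_definition cscale :: "complex \<Rightarrow> 'a ell2 \<Rightarrow> 'a ell2" is "\<lambda>c f a. c * f a"
  by (simp add: sqs_scale)

definition cinner :: "'a ell2 \<Rightarrow> 'a ell2 \<Rightarrow> complex" where
  "cinner x y = l2_inner (vec x) (vec y)"

lemma sqs_vec[simp]: "sqs (vec x)"
  using vec by auto

lemma cinner_add_left: "cinner (x + y) z = cinner x z + cinner y z"
  unfolding cinner_def by transfer (simp add: l2_inner_add_left)
lemma cinner_add_right: "cinner z (x + y) = cinner z x + cinner z y"
  unfolding cinner_def by transfer (simp add: l2_inner_add_right)
lemma cinner_diff_left: "cinner (x - y) z = cinner x z - cinner y z"
  unfolding cinner_def by transfer (simp add: l2_inner_minus_left)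
lemma cinner_diff_right: "cinner z (x - y) = cinner z x - cinner z y"
  unfolding cinner_def by transfer (simp add: l2_inner_minus_right)
lemma cinner_cnj: "cinner y x = cnj (cinner x y)"
  unfolding cinner_def by (rule l2_inner_cnj)
lemma cinner_cscale_left: "cinner (cscale c x) y = c * cinner x y"
  unfolding cinner_def by transfer (simp add: l2_inner_scale_left)
lemma cinner_cscale_right: "cinner y (cscale c x) = cnj c * cinner y x"
  unfolding cinner_def by transfer (simp add: l2_inner_scale_right)
lemma cinner_scaleR_left: "cinner (scaleR r x) y = of_real r * cinner x y"
  unfolding cinner_def by transfer (simp add: l2_inner_scale_left)
lemma cinner_self: "cinner x x = of_real (\<Sum>\<^sub>\<infinity>a. (cmod (vec x a))^2)"
  unfolding cinner_def by (simp add: l2_inner_self)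

lemma infsum_sq_nonneg: "0 \<le> (\<Sum>\<^sub>\<infinity>a. (cmod (f a))^2)"
  by (rule infsum_nonneg) simp

instantiation ell2 :: (type) real_inner
begin
definition norm_ell2 :: "'a ell2 \<Rightarrow> real" where "norm_ell2 x = sqrt (Re (cinner x x))"
definition sgn_ell2 :: "'a ell2 \<Rightarrow> 'a ell2" where "sgn_ell2 x = scaleR (inverse (norm x)) x"
definition dist_ell2 :: "'a ell2 \<Rightarrow> 'a ell2 \<Rightarrow> real" where "dist_ell2 x y = norm (x - y)"
definition uniformity_ell2 :: "('a ell2 \<times> 'a ell2) filter"
  where "uniformity_ell2 = (INF e\<in>{0 <..}. principal {(x, y). dist x y < e})"
definition open_ell2 :: "'a ell2 set \<Rightarrow> bool"
  where "open_ell2 S = (\<forall>x\<in>S. \<forall>\<^sub>F (x', y) in uniformity. x' = x \<longrightarrow> y \<in> S)"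
definition inner_ell2 :: "'a ell2 \<Rightarrow> 'a ell2 \<Rightarrow> real" where "inner_ell2 x y = Re (cinner x y)"
instance
proof
  fix x y z :: "'a ell2" and r :: real
  show "inner x y = inner y x" unfolding inner_ell2_def by (subst cinner_cnj) simp
  show "inner (x + y) z = inner x z + inner y z" unfolding inner_ell2_def by (simp add: cinner_add_left)
  show "inner (scaleR r x) y = r * inner x y" unfolding inner_ell2_def by (simp add: cinner_scaleR_left)
  show "0 \<le> inner x x" unfolding inner_ell2_def by (simp add: cinner_self infsum_sq_nonneg)
  show "(inner x x = 0) = (x = 0)"
  proof
    assume "inner x x = 0"
    hence h: "(\<Sum>\<^sub>\<infinity>a. (cmod (vec x a))^2) = 0" unfolding inner_ell2_def by (simp add: cinner_self)
    have "(cmod (vec x a))^2 = 0" for a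
      by (rule nonneg_infsum_le_0D[of _ UNIV]) (use h sqs_vec[of x, unfolded sqs_def] in auto)
    hence "vec x = vec 0" by (simp add: fun_eq_iff zero_ell2.rep_eq)
    thus "x = 0" by (simp add: vec_inject)
  next
    assume "x = 0" thus "inner x x = 0" unfolding inner_ell2_def cinner_self by (simp add: zero_ell2.rep_eq)
  qed
  show "norm x = sqrt (inner x x)" unfolding inner_ell2_def norm_ell2_def ..
qed (simp_all add: sgn_ell2_def dist_ell2_def uniformity_ell2_def open_ell2_def)
end

lemma norm_ell2_infsum: "norm x = sqrt (\<Sum>\<^sub>\<infinity>a. (cmod (vec x a))^2)"
  by (simp add: norm_ell2_def cinner_self)

lemma vec_mk: "sqs f \<Longrightarrow> vec (mk f) = f"
  by (simp add: mk_inverse)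

lemma l2_norm_mk: "sqs f \<Longrightarrow> l2_norm f = norm (mk f)"
  by (simp add: norm_ell2_infsum vec_mk l2_norm_def)

lemma l2_norm_diff_mk: "sqs f \<Longrightarrow> sqs g \<Longrightarrow> l2_norm (\<lambda>a. f a - g a) = norm (mk f - mk g)"
  by (simp add: l2_norm_mk sqs_minus minus_ell2.abs_eq eq_onp_def)

lemma l2_inner_mk: "sqs f \<Longrightarrow> sqs g \<Longrightarrow> l2_inner f g = cinner (mk f) (mk g)"
  by (simp add: cinner_def vec_mk)

lemma pointwise_le_norm: "cmod (vec x a) \<le> norm x"
proof -
  have "(cmod (vec x a))^2 \<le> (\<Sum>\<^sub>\<infinity>a. (cmod (vec x a))^2)"
    using finite_sum_le_infsum[of "\<lambda>a. (cmod (vec x a))^2" UNIV "{a}"] sqs_vec[of x, unfolded sqs_def]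
    by simp
  thus ?thesis unfolding norm_ell2_infsum by (simp add: real_le_rsqrt)
qed

lemma cinner_decomp: "cinner x y = Complex (inner x y) (inner x (cscale \<i> y))"
  by (simp add: inner_ell2_def cinner_cscale_right complex_eq_iff)

lemma vec_diff: "vec (x - y) a = vec x a - vec y a"
  by (simp add: minus_ell2.rep_eq)
lemma vec_add: "vec (x + y) a = vec x a + vec y a"
  by (simp add: plus_ell2.rep_eq)
lemma vec_cscale: "vec (cscale c x) a = c * vec x a"
  by (simp add: cscale.rep_eq)
lemma vec_zero: "vec 0 a = 0"
  by (simp add: zero_ell2.rep_eq)

lemma finite_sq_le_norm:
  assumes "finite F" shows "(\<Sum>a\<in>F. (cmod (vec x a))^2) \<le> (norm x)^2"
proof -
  have "(\<Sum>a\<in>F. (cmod (vec x a))^2) \<le> (\<Sum>\<^sub>\<infinity>a. (cmod (vec x a))^2)"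
    using finite_sum_le_infsum[of "\<lambda>a. (cmod (vec x a))^2" UNIV F] sqs_vec[of x, unfolded sqs_def] assms
    by simp
  thus ?thesis unfolding norm_ell2_infsum by (simp add: infsum_sq_nonneg)
qed

lemma complete_key:
  fixes X :: "nat \<Rightarrow> 'a ell2"
  assumes C: "\<And>m n. m \<ge> N \<Longrightarrow> n \<ge> N \<Longrightarrow> norm (X m - X n) \<le> e"
    and L: "\<And>a. (\<lambda>m. vec (X m) a) \<longlonglongrightarrow> L a" and n: "n \<ge> N"
  shows "sqs (\<lambda>a. vec (X n) a - L a) \<and> (\<Sum>\<^sub>\<infinity>a. (cmod (vec (X n) a - L a))^2) \<le> e^2"
proof -
  have e0: "0 \<le> e" using C[OF n n] by simp
  have fin: "(\<Sum>a\<in>F. (cmod (vec (X n) a - L a))^2) \<le> e^2" if F: "finite F" for F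
  proof -
    have lim: "(\<lambda>m. \<Sum>a\<in>F. (cmod (vec (X n) a - vec (X m) a))^2) \<longlonglongrightarrow> (\<Sum>a\<in>F. (cmod (vec (X n) a - L a))^2)"
      by (intro tendsto_intros L)
    have ev: "\<forall>\<^sub>F m in sequentially. (\<Sum>a\<in>F. (cmod (vec (X n) a - vec (X m) a))^2) \<le> e^2"
    proof (rule eventually_sequentiallyI[of N])
      fix m assume m: "N \<le> m"
      have "(\<Sum>a\<in>F. (cmod (vec (X n) a - vec (X m) a))^2) = (\<Sum>a\<in>F. (cmod (vec (X n - X m) a))^2)"
        by (simp add: vec_diff)
      also have "\<dots> \<le> (norm (X n - X m))^2" by (rule finite_sq_le_norm[OF F])
      also have "\<dots> \<le> e^2" using C[OF n m] by (simp add: power_mono)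
      finally show "(\<Sum>a\<in>F. (cmod (vec (X n) a - vec (X m) a))^2) \<le> e^2" .
    qed
    show ?thesis by (rule tendsto_le[OF _ tendsto_const lim ev]) simp
  qed
  have s: "(\<lambda>a. (cmod (vec (X n) a - L a))^2) summable_on UNIV"
    by (rule nonneg_bdd_above_summable_on) (auto intro!: bdd_aboveI2[where M="e^2"] fin)
  moreover have "(\<Sum>\<^sub>\<infinity>a. (cmod (vec (X n) a - L a))^2) \<le> e^2"
    by (rule infsum_le_finite_sums[OF s]) (rule fin)
  ultimately show ?thesis by (simp add: sqs_def)
qed

instance ell2 :: (type) complete_space
proof
  fix X :: "nat \<Rightarrow> 'a ell2" assume X: "Cauchy X"
  have pc: "Cauchy (\<lambda>n. vec (X n) a)" for a
  proof (rule metric_CauchyI)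
    fix e :: real assume "0 < e"
    then obtain M where M: "\<forall>m\<ge>M. \<forall>n\<ge>M. dist (X m) (X n) < e" using metric_CauchyD[OF X] by blast
    show "\<exists>M. \<forall>m\<ge>M. \<forall>n\<ge>M. dist (vec (X m) a) (vec (X n) a) < e"
    proof (intro exI allI impI)
      fix m n assume "M \<le> m" "M \<le> n"
      hence "dist (X m) (X n) < e" using M by blast
      moreover have "dist (vec (X m) a) (vec (X n) a) \<le> dist (X m) (X n)"
        using pointwise_le_norm[of "X m - X n" a] by (simp add: dist_norm dist_ell2_def vec_diff)
      ultimately show "dist (vec (X m) a) (vec (X n) a) < e" by simp
    qed
  qed
  define L where "L a = lim (\<lambda>n. vec (X n) a)" for a
  have L: "(\<lambda>n. vec (X n) a) \<longlonglongrightarrow> L a" for a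
    unfolding L_def using pc[of a] by (simp add: Cauchy_convergent_iff convergent_LIMSEQ_iff)
  have bound: "\<exists>N. \<forall>m\<ge>N. \<forall>n\<ge>N. norm (X m - X n) \<le> e" if "0 < e" for e
    using metric_CauchyD[OF X that] by (auto simp: dist_norm intro: less_imp_le)
  obtain N1 where N1: "\<forall>m\<ge>N1. \<forall>n\<ge>N1. norm (X m - X n) \<le> 1" using bound[of 1] by auto
  have s1: "sqs (\<lambda>a. vec (X N1) a - L a)" using complete_key[of N1 X 1 L N1] N1 L by auto
  have sL: "sqs L" using sqs_minus[OF sqs_vec[of "X N1"] s1] by simp
  have "X \<longlonglongrightarrow> mk L"
  proof (rule LIMSEQ_I)
    fix r :: real assume r: "0 < r"
    obtain N where N: "\<forall>m\<ge>N. \<forall>n\<ge>N. norm (X m - X n) \<le> r/2" using bound[of "r/2"] r by auto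
    show "\<exists>no. \<forall>n\<ge>no. norm (X n - mk L) < r"
    proof (intro exI allI impI)
      fix n assume n: "N \<le> n"
      have k: "(\<Sum>\<^sub>\<infinity>a. (cmod (vec (X n) a - L a))^2) \<le> (r/2)^2"
        using complete_key[of N X "r/2" L n] N L n by auto
      have "norm (X n - mk L) = sqrt (\<Sum>\<^sub>\<infinity>a. (cmod (vec (X n) a - L a))^2)"
        by (simp add: norm_ell2_infsum vec_diff vec_mk[OF sL])
      also have "\<dots> \<le> sqrt ((r/2)^2)" using k by (rule real_sqrt_le_mono)
      also have "\<dots> < r" using r by simp
      finally show "norm (X n - mk L) < r" .
    qed
  qed
  thus "convergent X" by (auto simp: convergent_def)
qed

lemma parallelogram:
  fixes a b :: "'a::real_inner"
  shows "(norm (a + b))^2 + (norm (a - b))^2 = 2 * (norm a)^2 + 2 * (norm b)^2"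
  by (simp add: power2_norm_eq_inner inner_add inner_diff inner_commute)

lemma proj_exists:
  fixes M :: "'a::{real_inner,complete_space} set"
  assumes cl: "closed M" and z: "0 \<in> M" and add: "\<And>x y. x\<in>M \<Longrightarrow> y\<in>M \<Longrightarrow> x+y \<in> M"
    and sc: "\<And>r x. x\<in>M \<Longrightarrow> scaleR r x \<in> M"
  shows "\<exists>p\<in>M. \<forall>m\<in>M. inner (x - p) m = 0"
proof -
  define S where "S = (\<lambda>m. (norm (x - m))^2) ` M"
  define D where "D = Inf S"
  have bdd: "bdd_below S" unfolding S_def by (auto intro!: bdd_belowI[where m=0])
  have ne: "S \<noteq> {}" unfolding S_def using z by auto
  have Dle: "D \<le> (norm (x - m))^2" if "m \<in> M" for m
    unfolding D_def by (rule cInf_lower[OF _ bdd]) (use that S_def in auto)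
  have "\<exists>m\<in>M. (norm (x - m))^2 < D + 1/(real n + 1)" for n
  proof -
    have "Inf S < D + 1/(real n + 1)" unfolding D_def by simp
    then obtain s where "s \<in> S" "s < D + 1/(real n + 1)" using cInf_less_iff[OF ne bdd] by blast
    thus ?thesis unfolding S_def by auto
  qed
  then obtain u where uM: "\<And>n. u n \<in> M" and ul: "\<And>n. (norm (x - u n))^2 < D + 1/(real n + 1)"
    by metis
  have diff: "(norm (u m - u n))^2 \<le> 2/(real m + 1) + 2/(real n + 1)" for m n
  proof -
    have mid: "scaleR (1/2) (u m + u n) \<in> M" by (intro sc add uM)
    have eq: "(x - u m) + (x - u n) = scaleR 2 (x - scaleR (1/2) (u m + u n))"
      by (simp add: algebra_simps scaleR_2)
    have "(norm ((x - u m) + (x - u n)))^2 = 4 * (norm (x - scaleR (1/2) (u m + u n)))^2"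
      unfolding eq by (simp add: power2_eq_square)
    hence ge: "(norm ((x - u m) + (x - u n)))^2 \<ge> 4 * D" using Dle[OF mid] by simp
    have "(x - u m) - (x - u n) = u n - u m" by simp
    hence "(norm (u m - u n))^2 = 2 * (norm (x - u m))^2 + 2 * (norm (x - u n))^2 - (norm ((x - u m) + (x - u n)))^2"
      using parallelogram[of "x - u m" "x - u n"] by (simp add: norm_minus_commute)
    thus ?thesis using ge ul[of m] ul[of n] by simp
  qed
  have "Cauchy u"
  proof (rule metric_CauchyI)
    fix e :: real assume e: "0 < e"
    obtain N :: nat where N: "4 / e^2 < real N" using reals_Archimedean2 by blast
    show "\<exists>M. \<forall>m\<ge>M. \<forall>n\<ge>M. dist (u m) (u n) < e"
    proof (intro exI allI impI)
      fix m n assume m: "N \<le> m" and n: "N \<le> n"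
      have e2: "0 < e^2" using e by simp
      have "4 / e^2 < real N + 1" using N by simp
      hence "4 < e^2 * (real N + 1)" using e2 by (simp add: field_simps)
      hence Ne: "4 / (real N + 1) < e^2" by (simp add: field_simps)
      have "2/(real m + 1) \<le> 2/(real N + 1)" using m by (intro divide_left_mono) auto
      moreover have "2/(real n + 1) \<le> 2/(real N + 1)" using n by (intro divide_left_mono) auto
      ultimately have "(norm (u m - u n))^2 < e^2" using diff[of m n] Ne by simp
      hence "norm (u m - u n) < e" using e by (simp add: power_less_imp_less_base)
      thus "dist (u m) (u n) < e" by (simp add: dist_norm)
    qed
  qed
  then obtain p where up: "u \<longlonglongrightarrow> p" using Cauchy_convergent_iff convergent_def by blast
  have pM: "p \<in> M" using cl uM up closed_sequentially by blast
  have Dp: "(norm (x - p))^2 \<le> D"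
  proof (rule tendsto_le[of sequentially "\<lambda>n. D + 1/(real n + 1)" D "\<lambda>n. (norm (x - u n))^2"])
    show "(\<lambda>n. D + 1/(real n + 1)) \<longlonglongrightarrow> D"
      using tendsto_add[OF tendsto_const[of D] LIMSEQ_inverse_real_of_nat] by (simp add: inverse_eq_divide add.commute)
    show "(\<lambda>n. (norm (x - u n))^2) \<longlonglongrightarrow> (norm (x - p))^2" by (intro tendsto_intros up)
    show "\<forall>\<^sub>F n in sequentially. (norm (x - u n))^2 \<le> D + 1/(real n + 1)"
      using ul by (simp add: less_imp_le)
  qed simp
  have "\<forall>m\<in>M. inner (x - p) m = 0"
  proof
    fix m assume mM: "m \<in> M"
    show "inner (x - p) m = 0"
    proof (cases "m = 0")
      case True thus ?thesis by simp
    next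
      case False
      define t where "t = inner (x - p) m / (norm m)^2"
      have nm: "0 < (norm m)^2" using False by simp
      have qM: "p + scaleR t m \<in> M" by (intro add pM sc mM)
      have e1: "x - (p + scaleR t m) = (x - p) - scaleR t m" by simp
      have "(norm (x - (p + scaleR t m)))^2 = (norm (x - p))^2 - 2 * t * inner (x - p) m + t^2 * (norm m)^2"
        unfolding e1 power2_norm_eq_inner
        by (simp add: inner_diff inner_commute power2_eq_square algebra_simps)
      also have "\<dots> = (norm (x - p))^2 - (inner (x - p) m)^2 / (norm m)^2"
        using nm by (simp add: t_def power2_eq_square field_simps)
      finally have "D \<le> (norm (x - p))^2 - (inner (x - p) m)^2 / (norm m)^2" using Dle[OF qM] by simp
      hence "(inner (x - p) m)^2 / (norm m)^2 \<le> 0" using Dp by simp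
      hence "(inner (x - p) m)^2 \<le> 0" using nm by (simp add: divide_le_0_iff)
      thus ?thesis by simp
    qed
  qed
  thus ?thesis using pM by blast
qed

lemma proj_ell2:
  fixes M :: "'a ell2 set"
  assumes cl: "closed M" and z: "0 \<in> M" and add: "\<And>x y. x\<in>M \<Longrightarrow> y\<in>M \<Longrightarrow> x+y \<in> M"
    and sc: "\<And>c x. x\<in>M \<Longrightarrow> cscale c x \<in> M"
  shows "\<exists>p\<in>M. \<forall>m\<in>M. cinner (x - p) m = 0"
proof -
  have scR: "scaleR r x \<in> M" if "x \<in> M" for r x
  proof -
    have "scaleR r x = cscale (of_real r) x" by transfer simp
    thus ?thesis using sc[OF that] by simp
  qed
  obtain p where pM: "p \<in> M" and o: "\<forall>m\<in>M. inner (x - p) m = 0"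
    using proj_exists[OF cl z add scR] by blast
  show ?thesis
    using pM o sc by (auto simp: cinner_decomp complex_eq_iff)
qed

lemma mk_add: "sqs f \<Longrightarrow> sqs g \<Longrightarrow> mk (\<lambda>a. f a + g a) = mk f + mk g"
  by (simp add: vec_inject[symmetric] fun_eq_iff vec_add vec_mk sqs_add)
lemma mk_diff: "sqs f \<Longrightarrow> sqs g \<Longrightarrow> mk (\<lambda>a. f a - g a) = mk f - mk g"
  by (simp add: vec_inject[symmetric] fun_eq_iff vec_diff vec_mk sqs_minus)
lemma mk_cscale: "sqs f \<Longrightarrow> mk (\<lambda>a. c * f a) = cscale c (mk f)"
  by (simp add: vec_inject[symmetric] fun_eq_iff vec_cscale vec_mk sqs_scale)

lemma l2_lim_iff:
  assumes "\<And>n. sqs (u n)" "sqs x"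
  shows "(\<lambda>n. l2_norm (\<lambda>a. u n a - x a)) \<longlonglongrightarrow> 0 \<longleftrightarrow> (\<lambda>n. mk (u n)) \<longlonglongrightarrow> mk x"
proof -
  have "(\<lambda>n. l2_norm (\<lambda>a. u n a - x a)) = (\<lambda>n. norm (mk (u n) - mk x))"
    using assms by (simp add: l2_norm_diff_mk)
  thus ?thesis by (simp add: tendsto_norm_zero_iff LIM_zero_iff)
qed

lemma norm_cscale: "norm (cscale c x) = cmod c * norm x"
proof -
  have "(\<Sum>\<^sub>\<infinity>a. (cmod (c * vec x a))^2) = (cmod c)^2 * (\<Sum>\<^sub>\<infinity>a. (cmod (vec x a))^2)"
    by (simp add: norm_mult power_mult_distrib infsum_cmult_right sqs_vec[of x, unfolded sqs_def])
  thus ?thesis by (simp add: norm_ell2_infsum vec_cscale real_sqrt_mult)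
qed

lemma cscale_diff: "cscale c x - cscale c y = cscale c (x - y)"
  by transfer (simp add: algebra_simps)

lemma tendsto_cscale: "X \<longlonglongrightarrow> y \<Longrightarrow> (\<lambda>n. cscale c (X n)) \<longlonglongrightarrow> cscale c y"
proof -
  assume "X \<longlonglongrightarrow> y"
  hence "(\<lambda>n. norm (X n - y)) \<longlonglongrightarrow> 0" by (simp add: tendsto_norm_zero_iff LIM_zero_iff)
  hence "(\<lambda>n. cmod c * norm (X n - y)) \<longlonglongrightarrow> 0" using tendsto_mult_right_zero by blast
  hence "(\<lambda>n. norm (cscale c (X n) - cscale c y)) \<longlonglongrightarrow> 0" by (simp add: cscale_diff norm_cscale)
  thus ?thesis by (simp add: tendsto_norm_zero_iff LIM_zero_iff)
qed

lemma tendsto_cinner_right: "X \<longlonglongrightarrow> x \<Longrightarrow> (\<lambda>n. cinner z (X n)) \<longlonglongrightarrow> cinner z x"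
  unfolding cinner_decomp by (intro tendsto_intros tendsto_cscale) auto

lemma tendsto_cinner_left: "X \<longlonglongrightarrow> x \<Longrightarrow> (\<lambda>n. cinner (X n) z) \<longlonglongrightarrow> cinner x z"
proof -
  assume "X \<longlonglongrightarrow> x"
  hence "(\<lambda>n. cnj (cinner z (X n))) \<longlonglongrightarrow> cnj (cinner z x)" by (intro tendsto_intros tendsto_cinner_right)
  thus ?thesis by (simp add: cinner_cnj[of z])
qed

lemma l2_inner_cont:
  assumes "\<And>n. sqs (u n)" "sqs x" "sqs z" "(\<lambda>n. l2_norm (\<lambda>a. u n a - x a)) \<longlonglongrightarrow> 0"
  shows "(\<lambda>n. l2_inner z (u n)) \<longlonglongrightarrow> l2_inner z x" "(\<lambda>n. l2_inner (u n) z) \<longlonglongrightarrow> l2_inner x z"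
proof -
  have m: "(\<lambda>n. mk (u n)) \<longlonglongrightarrow> mk x" using assms l2_lim_iff by blast
  show "(\<lambda>n. l2_inner z (u n)) \<longlonglongrightarrow> l2_inner z x"
    using tendsto_cinner_right[OF m, of "mk z"] assms by (simp add: l2_inner_mk)
  show "(\<lambda>n. l2_inner (u n) z) \<longlonglongrightarrow> l2_inner x z"
    using tendsto_cinner_left[OF m, of "mk z"] assms by (simp add: l2_inner_mk)
qed

lemma cspan_sub:
  assumes "S \<subseteq> M" "(\<lambda>a. 0) \<in> M" "\<And>f g. f\<in>M \<Longrightarrow> g\<in>M \<Longrightarrow> (\<lambda>a. f a + g a) \<in> M"
    "\<And>c f. f\<in>M \<Longrightarrow> (\<lambda>a. c * f a) \<in> M"
  shows "cspan S \<subseteq> M"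
proof
  fix x assume "x \<in> cspan S"
  then obtain n :: nat and c v where v: "\<forall>i<n. v i \<in> S" and x: "x = (\<lambda>a. \<Sum>i<n. c i * v i a)"
    unfolding cspan_def mem_Collect_eq by auto
  have "(\<lambda>a. \<Sum>i<k. c i * v i a) \<in> M" if "k \<le> n" for k
    using that
  proof (induction k)
    case 0 thus ?case using assms(2) by simp
  next
    case (Suc k)
    have "v k \<in> M" using assms(1) v Suc.prems by auto
    hence "(\<lambda>a. c k * v k a) \<in> M" by (rule assms(4))
    thus ?case using assms(3)[OF Suc.IH] Suc.prems by simp
  qed
  thus "x \<in> M" using x by simp
qed

lemma cl_span_sub:
  assumes "S \<subseteq> M" "(\<lambda>a. 0) \<in> M" "\<And>f g. f\<in>M \<Longrightarrow> g\<in>M \<Longrightarrow> (\<lambda>a. f a + g a) \<in> M"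
    "\<And>c f. f\<in>M \<Longrightarrow> (\<lambda>a. c * f a) \<in> M"
    "\<And>u x. (\<And>n. u n \<in> M) \<Longrightarrow> sqs x \<Longrightarrow> (\<lambda>n. l2_norm (\<lambda>a. u n a - x a)) \<longlonglongrightarrow> 0 \<Longrightarrow> x \<in> M"
  shows "cl_span I S \<subseteq> M"
proof
  fix x assume "x \<in> cl_span I S"
  then obtain u where x: "x \<in> l2 I" and u: "\<And>n. u n \<in> cspan S" and lim: "(\<lambda>n. l2_norm (\<lambda>a. u n a - x a)) \<longlonglongrightarrow> 0"
    unfolding cl_span_def l2_closure_def by blast
  have "\<And>n. u n \<in> M" using cspan_sub[OF assms(1-4)] u by blast
  thus "x \<in> M" using assms(5) lim l2_sqs[OF x] by blast
qed

lemma cspan_l2: "S \<subseteq> l2 I \<Longrightarrow> cspan S \<subseteq> l2 I"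
  by (rule cspan_sub) (auto intro: l2_add l2_scale l2_zero)

lemma cspan_add: "x \<in> cspan S \<Longrightarrow> y \<in> cspan S \<Longrightarrow> (\<lambda>a. x a + y a) \<in> cspan S"
proof -
  assume "x \<in> cspan S" "y \<in> cspan S"
  then obtain n m :: nat and c v d w where v: "\<forall>i<n. v i \<in> S" and x: "x = (\<lambda>a. \<Sum>i<n. c i * v i a)"
    and w: "\<forall>i<m. w i \<in> S" and y: "y = (\<lambda>a. \<Sum>i<m. d i * w i a)"
    unfolding cspan_def mem_Collect_eq by auto
  define c' where "c' i = (if i < n then c i else d (i - n))" for i
  define v' where "v' i = (if i < n then v i else w (i - n))" for i
  have sp: "(\<Sum>i<n+k. g i) = (\<Sum>i<n. g i) + (\<Sum>i<k. g (n + i))" for g :: "nat \<Rightarrow> complex" and k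
    by (induction k) (simp_all add: add.assoc)
  have "(\<lambda>a. x a + y a) = (\<lambda>a. \<Sum>i<n+m. c' i * v' i a)"
    by (simp add: x y sp c'_def v'_def fun_eq_iff)
  moreover have "\<forall>i<n+m. v' i \<in> S" using v w by (auto simp: v'_def)
  ultimately show ?thesis unfolding cspan_def mem_Collect_eq by auto
qed

lemma cspan_scale: "x \<in> cspan S \<Longrightarrow> (\<lambda>a. k * x a) \<in> cspan S"
proof -
  assume "x \<in> cspan S"
  then obtain n :: nat and c v where v: "\<forall>i<n. v i \<in> S" and x: "x = (\<lambda>a. \<Sum>i<n. c i * v i a)"
    unfolding cspan_def mem_Collect_eq by auto
  have "(\<lambda>a. k * x a) = (\<lambda>a. \<Sum>i<n. (k * c i) * v i a)"
    by (simp add: x sum_distrib_left mult.assoc)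
  thus ?thesis using v unfolding cspan_def mem_Collect_eq
    by (intro exI[of _ n] exI[of _ "\<lambda>i. k * c i"] exI[of _ v]) simp
qed

lemma cspan_zero: "(\<lambda>a. 0) \<in> cspan S"
  unfolding cspan_def mem_Collect_eq by (rule exI[of _ 0]) simp

lemma S_cspan: "s \<in> S \<Longrightarrow> s \<in> cspan S"
  unfolding cspan_def mem_Collect_eq by (rule exI[of _ 1], rule exI[of _ "\<lambda>_. 1"], rule exI[of _ "\<lambda>_. s"]) simp

lemma l2_closure_const: "x \<in> l2 I \<Longrightarrow> x \<in> X \<Longrightarrow> x \<in> l2_closure I X"
  unfolding l2_closure_def by (auto intro!: exI[of _ "\<lambda>_. x"] simp: l2_norm_def)

lemma S_cl_span: "S \<subseteq> l2 I \<Longrightarrow> S \<subseteq> cl_span I S"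
  unfolding cl_span_def by (auto intro: l2_closure_const S_cspan)

lemma l2_inner_zero_left[simp]: "l2_inner (\<lambda>a. 0) z = 0"
  by (simp add: l2_inner_def)
lemma l2_inner_zero_right[simp]: "l2_inner z (\<lambda>a. 0) = 0"
  by (simp add: l2_inner_def)

lemma lim_zero_const:
  assumes "(\<lambda>n. f n) \<longlonglongrightarrow> L" "\<And>n. f n = (0::complex)" shows "L = 0"
proof -
  have "(\<lambda>n. f n) = (\<lambda>n. 0)" using assms(2) by auto
  thus ?thesis using LIMSEQ_unique[OF assms(1) ] tendsto_const by metis
qed

lemma cl_span_orth:
  assumes z: "sqs z" and S: "\<And>s. s \<in> S \<Longrightarrow> sqs s \<and> l2_inner s z = 0"
  shows "\<And>g. g \<in> cl_span I S \<Longrightarrow> l2_inner g z = 0"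
proof -
  have "cl_span I S \<subseteq> {g. sqs g \<and> l2_inner g z = 0}"
  proof (rule cl_span_sub)
    show "S \<subseteq> {g. sqs g \<and> l2_inner g z = 0}" using S by auto
    show "(\<lambda>a. 0) \<in> {g. sqs g \<and> l2_inner g z = 0}" by simp
    show "(\<lambda>a. f a + g a) \<in> {g. sqs g \<and> l2_inner g z = 0}"
      if "f \<in> {g. sqs g \<and> l2_inner g z = 0}" "g \<in> {g. sqs g \<and> l2_inner g z = 0}" for f g
      using that z by (simp add: sqs_add l2_inner_add_left)
    show "(\<lambda>a. c * f a) \<in> {g. sqs g \<and> l2_inner g z = 0}" if "f \<in> {g. sqs g \<and> l2_inner g z = 0}" for c f
      using that by (simp add: sqs_scale l2_inner_scale_left)
    show "x \<in> {g. sqs g \<and> l2_inner g z = 0}"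
      if "\<And>n. u n \<in> {g. sqs g \<and> l2_inner g z = 0}" "sqs x" "(\<lambda>n. l2_norm (\<lambda>a. u n a - x a)) \<longlonglongrightarrow> 0" for u x
    proof -
      have "(\<lambda>n. l2_inner (u n) z) \<longlonglongrightarrow> l2_inner x z" using that z by (intro l2_inner_cont) auto
      thus ?thesis using that lim_zero_const[of "\<lambda>n. l2_inner (u n) z"] by auto
    qed
  qed
  thus "\<And>g. g \<in> cl_span I S \<Longrightarrow> l2_inner g z = 0" by blast
qed

lemma cl_span_orth':
  assumes z: "sqs z" and S: "\<And>s. s \<in> S \<Longrightarrow> sqs s \<and> l2_inner s z = 0"
  shows "\<And>g. g \<in> cl_span I S \<Longrightarrow> l2_inner z g = 0"
  using cl_span_orth[OF assms] l2_inner_cnj by (metis complex_cnj_zero)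

lemma cl_span_l2: "cl_span I S \<subseteq> l2 I"
  unfolding cl_span_def l2_closure_def by auto

lemma cl_span_closed:
  assumes S: "S \<subseteq> l2 I" shows "closed_subspace I (cl_span I S)"
proof -
  have cs: "\<And>u. u \<in> cspan S \<Longrightarrow> sqs u" using cspan_l2[OF S] l2_sqs by blast
  have add: "(\<lambda>a. x a + y a) \<in> cl_span I S" if xS: "x \<in> cl_span I S" and yS: "y \<in> cl_span I S" for x y
  proof -
    obtain u where x: "x \<in> l2 I" and u: "\<And>n. u n \<in> cspan S" and lu: "(\<lambda>n. l2_norm (\<lambda>a. u n a - x a)) \<longlonglongrightarrow> 0"
      using xS unfolding cl_span_def l2_closure_def by blast
    obtain v where y: "y \<in> l2 I" and v: "\<And>n. v n \<in> cspan S" and lv: "(\<lambda>n. l2_norm (\<lambda>a. v n a - y a)) \<longlonglongrightarrow> 0"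
      using yS unfolding cl_span_def l2_closure_def by blast
    have mu: "(\<lambda>n. mk (u n)) \<longlonglongrightarrow> mk x" using lu l2_lim_iff[of u x] cs u l2_sqs[OF x] by blast
    have mv: "(\<lambda>n. mk (v n)) \<longlonglongrightarrow> mk y" using lv l2_lim_iff[of v y] cs v l2_sqs[OF y] by blast
    have "(\<lambda>n. mk (u n) + mk (v n)) \<longlonglongrightarrow> mk x + mk y" using mu mv by (rule tendsto_add)
    hence "(\<lambda>n. mk (\<lambda>a. u n a + v n a)) \<longlonglongrightarrow> mk (\<lambda>a. x a + y a)"
      using cs u v l2_sqs[OF x] l2_sqs[OF y] by (simp add: mk_add)
    hence "(\<lambda>n. l2_norm (\<lambda>a. u n a + v n a - (x a + y a))) \<longlonglongrightarrow> 0"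
      using l2_lim_iff[of "\<lambda>n a. u n a + v n a" "\<lambda>a. x a + y a"] cs u v l2_sqs[OF x] l2_sqs[OF y]
      by (simp add: sqs_add)
    moreover have "\<And>n. (\<lambda>a. u n a + v n a) \<in> cspan S" using u v by (simp add: cspan_add)
    moreover have "(\<lambda>a. x a + y a) \<in> l2 I" using x y by (rule l2_add)
    ultimately show ?thesis unfolding cl_span_def l2_closure_def
      by (auto intro!: exI[of _ "\<lambda>n a. u n a + v n a"])
  qed
  have sc: "(\<lambda>a. c * x a) \<in> cl_span I S" if xS: "x \<in> cl_span I S" for x c
  proof -
    obtain u where x: "x \<in> l2 I" and u: "\<And>n. u n \<in> cspan S" and lu: "(\<lambda>n. l2_norm (\<lambda>a. u n a - x a)) \<longlonglongrightarrow> 0"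
      using xS unfolding cl_span_def l2_closure_def by blast
    have mu: "(\<lambda>n. mk (u n)) \<longlonglongrightarrow> mk x" using lu l2_lim_iff[of u x] cs u l2_sqs[OF x] by blast
    hence "(\<lambda>n. cscale c (mk (u n))) \<longlonglongrightarrow> cscale c (mk x)" by (rule tendsto_cscale)
    hence "(\<lambda>n. mk (\<lambda>a. c * u n a)) \<longlonglongrightarrow> mk (\<lambda>a. c * x a)"
      using cs u l2_sqs[OF x] by (simp add: mk_cscale)
    hence "(\<lambda>n. l2_norm (\<lambda>a. c * u n a - c * x a)) \<longlonglongrightarrow> 0"
      using l2_lim_iff[of "\<lambda>n a. c * u n a" "\<lambda>a. c * x a"] cs u l2_sqs[OF x]
      by (simp add: sqs_scale)
    moreover have "\<And>n. (\<lambda>a. c * u n a) \<in> cspan S" using u by (simp add: cspan_scale)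
    moreover have "(\<lambda>a. c * x a) \<in> l2 I" using x by (rule l2_scale)
    ultimately show ?thesis unfolding cl_span_def l2_closure_def
      by (auto intro!: exI[of _ "\<lambda>n a. c * u n a"])
  qed
  have cl: "l2_closure I (cl_span I S) \<subseteq> cl_span I S"
  proof
    fix x assume "x \<in> l2_closure I (cl_span I S)"
    then obtain w where x: "x \<in> l2 I" and w: "\<And>n. w n \<in> cl_span I S"
      and lw: "(\<lambda>n. l2_norm (\<lambda>a. w n a - x a)) \<longlonglongrightarrow> 0"
      unfolding l2_closure_def by blast
    have sw: "sqs (w n)" for n using w cl_span_l2 l2_sqs by blast
    have "\<exists>u. u \<in> cspan S \<and> l2_norm (\<lambda>a. u a - w n a) < inverse (real n + 1)" for n
    proof -
      obtain v where v: "\<And>k. v k \<in> cspan S" and lv: "(\<lambda>k. l2_norm (\<lambda>a. v k a - w n a)) \<longlonglongrightarrow> 0"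
        using w[of n] unfolding cl_span_def l2_closure_def by blast
      have "inverse (real n + 1) > 0" by simp
      then obtain k where "norm (l2_norm (\<lambda>a. v k a - w n a) - 0) < inverse (real n + 1)"
        using LIMSEQ_D[OF lv] by blast
      hence "l2_norm (\<lambda>a. v k a - w n a) < inverse (real n + 1)" by simp
      thus ?thesis using v by blast
    qed
    then obtain U where U: "\<And>n. U n \<in> cspan S" and Ul: "\<And>n. l2_norm (\<lambda>a. U n a - w n a) < inverse (real n + 1)"
      by metis
    have mw: "(\<lambda>n. mk (w n)) \<longlonglongrightarrow> mk x" using lw l2_lim_iff[of w x] sw l2_sqs[OF x] by blast
    have "(\<lambda>n. mk (U n) - mk (w n)) \<longlonglongrightarrow> 0"
    proof (rule Lim_null_comparison)
      show "\<forall>\<^sub>F n in sequentially. norm (mk (U n) - mk (w n)) \<le> inverse (real n + 1)"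
        using Ul cs U sw by (simp add: l2_norm_diff_mk less_imp_le)
      show "(\<lambda>n. inverse (real n + 1)) \<longlonglongrightarrow> 0"
        using LIMSEQ_inverse_real_of_nat by (simp add: add.commute)
    qed
    hence "(\<lambda>n. (mk (U n) - mk (w n)) + mk (w n)) \<longlonglongrightarrow> 0 + mk x" using mw by (rule tendsto_add)
    hence "(\<lambda>n. mk (U n)) \<longlonglongrightarrow> mk x" by simp
    hence "(\<lambda>n. l2_norm (\<lambda>a. U n a - x a)) \<longlonglongrightarrow> 0" using l2_lim_iff[of U x] cs U l2_sqs[OF x] by blast
    thus "x \<in> cl_span I S" using x U unfolding cl_span_def l2_closure_def by blast
  qed
  have z: "(\<lambda>a. 0) \<in> cl_span I S"
    unfolding cl_span_def by (rule l2_closure_const[OF l2_zero cspan_zero])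
  show ?thesis unfolding closed_subspace_def using cl_span_l2 add sc cl z by blast
qed

lemma orth_closed:
  assumes X: "X \<subseteq> l2 UNIV" shows "closed_subspace I (orth I X)"
proof -
  have sX: "\<And>y. y \<in> X \<Longrightarrow> sqs y" using X l2_UNIV by blast
  have cl: "l2_closure I (orth I X) \<subseteq> orth I X"
  proof
    fix x assume "x \<in> l2_closure I (orth I X)"
    then obtain u where x: "x \<in> l2 I" and u: "\<And>n. u n \<in> orth I X"
      and lu: "(\<lambda>n. l2_norm (\<lambda>a. u n a - x a)) \<longlonglongrightarrow> 0"
      unfolding l2_closure_def by blast
    have su: "\<And>n. sqs (u n)" using u by (auto simp: orth_def intro: l2_sqs)
    have "l2_inner x y = 0" if y: "y \<in> X" for y
    proof -
      have "(\<lambda>n. l2_inner (u n) y) \<longlonglongrightarrow> l2_inner x y"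
        using su lu l2_sqs[OF x] sX[OF y] by (intro l2_inner_cont) auto
      thus ?thesis using u y lim_zero_const[of "\<lambda>n. l2_inner (u n) y"] by (auto simp: orth_def)
    qed
    thus "x \<in> orth I X" using x by (simp add: orth_def)
  qed
  show ?thesis unfolding closed_subspace_def using cl sX
    by (auto simp: orth_def l2_zero l2_add l2_scale l2_sqs l2_inner_add_left l2_inner_scale_left)
qed

lemma closed_mk:
  assumes C: "closed_subspace I C" shows "closed (mk ` C)"
proof (unfold closed_sequential_limits, intro allI impI, elim conjE)
  fix X l assume X: "\<forall>n. X n \<in> mk ` C" and l: "X \<longlonglongrightarrow> l"
  have CI: "C \<subseteq> l2 I" and clC: "l2_closure I C \<subseteq> C" using C by (auto simp: closed_subspace_def)
  have "\<forall>n. \<exists>c. c \<in> C \<and> X n = mk c" using X by blast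
  then obtain c where cc: "\<forall>n. c n \<in> C \<and> X n = mk (c n)" by (metis choice)
  hence c: "\<And>n. c n \<in> C" and Xc: "\<And>n. X n = mk (c n)" by auto
  have sc: "sqs (c n)" for n using c CI l2_sqs by blast
  have van: "vec l a = 0" if a: "a \<notin> I" for a
  proof -
    have "\<And>n. cmod (vec l a) \<le> norm (X n - l)"
    proof -
      fix n
      have "vec (X n) a = 0" using Xc[of n] vec_mk[OF sc] c CI a by (auto simp: l2_def)
      hence "cmod (vec l a) = cmod (vec (X n - l) a)" by (simp add: vec_diff)
      thus "cmod (vec l a) \<le> norm (X n - l)" using pointwise_le_norm by metis
    qed
    moreover have "(\<lambda>n. norm (X n - l)) \<longlonglongrightarrow> 0" using l by (simp add: tendsto_norm_zero_iff LIM_zero_iff)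
    ultimately have "cmod (vec l a) \<le> 0"
      by (intro tendsto_le[OF _ _ tendsto_const, of sequentially "\<lambda>n. norm (X n - l)"]) auto
    thus ?thesis by simp
  qed
  have lI: "vec l \<in> l2 I" using van by (simp add: l2_iff)
  have "(\<lambda>n. mk (c n)) = X" using Xc by auto
  hence "(\<lambda>n. mk (c n)) \<longlonglongrightarrow> mk (vec l)" using l by (simp add: vec_inverse)
  hence "(\<lambda>n. l2_norm (\<lambda>a. c n a - vec l a)) \<longlonglongrightarrow> 0" using l2_lim_iff[of c "vec l"] sc by simp
  hence "vec l \<in> C" using clC c lI unfolding l2_closure_def by blast
  thus "l \<in> mk ` C" by (metis image_eqI vec_inverse)
qed

lemma proj_frozen:
  assumes C: "closed_subspace I C" and x: "x \<in> l2 I"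
  shows "\<exists>p\<in>C. (\<lambda>a. x a - p a) \<in> orth I C"
proof -
  have CI: "C \<subseteq> l2 I" and z: "(\<lambda>a. 0) \<in> C" and ad: "\<And>x y. x\<in>C \<Longrightarrow> y\<in>C \<Longrightarrow> (\<lambda>a. x a + y a) \<in> C"
    and sc: "\<And>c x. x\<in>C \<Longrightarrow> (\<lambda>a. c * x a) \<in> C"
    using C by (auto simp: closed_subspace_def)
  have sC: "\<And>y. y \<in> C \<Longrightarrow> sqs y" using CI l2_sqs by blast
  have "\<exists>p\<in>mk ` C. \<forall>m\<in>mk ` C. cinner (mk x - p) m = 0"
  proof (rule proj_ell2[OF closed_mk[OF C]])
    show "0 \<in> mk ` C" using z by (metis image_eqI zero_ell2.abs_eq)
    show "a + b \<in> mk ` C" if "a \<in> mk ` C" "b \<in> mk ` C" for a b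
      using that ad sC by (auto simp: mk_add[symmetric])
    show "cscale c a \<in> mk ` C" if "a \<in> mk ` C" for a c
      using that sc sC by (auto simp: mk_cscale[symmetric])
  qed
  then obtain p where p: "p \<in> C" and o: "\<forall>m\<in>C. cinner (mk x - mk p) (mk m) = 0" by blast
  have "(\<lambda>a. x a - p a) \<in> orth I C"
    unfolding orth_def using o x p CI sC l2_sqs[OF x]
    by (auto simp: l2_minus l2_inner_mk sqs_minus mk_diff)
  thus ?thesis using p by blast
qed

lemma prod_abs_summable:
  fixes u :: "'a \<Rightarrow> complex" and v :: "'b \<Rightarrow> complex"
  assumes u: "(\<lambda>a. norm (u a)) summable_on UNIV" and v: "(\<lambda>b. norm (v b)) summable_on UNIV"
  shows "(\<lambda>x. norm (u (fst x) * v (snd x))) summable_on UNIV"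
proof (rule nonneg_bdd_above_summable_on)
  show "bdd_above (sum (\<lambda>x. norm (u (fst x) * v (snd x))) ` {F. F \<subseteq> UNIV \<and> finite F})"
  proof (rule bdd_aboveI2)
    fix F :: "('a \<times> 'b) set" assume "F \<in> {F. F \<subseteq> UNIV \<and> finite F}"
    hence F: "finite F" by simp
    have "(\<Sum>x\<in>F. norm (u (fst x) * v (snd x))) \<le> (\<Sum>x\<in>fst ` F \<times> snd ` F. norm (u (fst x) * v (snd x)))"
      using F by (intro sum_mono2) (auto intro: finite_imageI rev_image_eqI)
    also have "\<dots> = (\<Sum>a\<in>fst ` F. norm (u a)) * (\<Sum>b\<in>snd ` F. norm (v b))"
      by (simp add: sum_product sum.cartesian_product norm_mult case_prod_beta)
    also have "\<dots> \<le> (\<Sum>\<^sub>\<infinity>a. norm (u a)) * (\<Sum>\<^sub>\<infinity>b. norm (v b))"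
      using F u v by (intro mult_mono finite_sum_le_infsum sum_nonneg infsum_nonneg) auto
    finally show "(\<Sum>x\<in>F. norm (u (fst x) * v (snd x))) \<le> (\<Sum>\<^sub>\<infinity>a. norm (u a)) * (\<Sum>\<^sub>\<infinity>b. norm (v b))" .
  qed
qed simp

lemma prod_infsum:
  fixes u :: "'a \<Rightarrow> complex" and v :: "'b \<Rightarrow> complex"
  assumes u: "(\<lambda>a. norm (u a)) summable_on UNIV" and v: "(\<lambda>b. norm (v b)) summable_on UNIV"
  shows "(\<lambda>x. u (fst x) * v (snd x)) summable_on UNIV"
    and "(\<Sum>\<^sub>\<infinity>x. u (fst x) * v (snd x)) = (\<Sum>\<^sub>\<infinity>a. u a) * (\<Sum>\<^sub>\<infinity>b. v b)"
proof -
  show s: "(\<lambda>x. u (fst x) * v (snd x)) summable_on UNIV"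
    using Infinite_Sum.abs_summable_summable[OF prod_abs_summable[OF u v]] .
  have eq: "(\<lambda>(x,y). u x * v y) = (\<lambda>x. u (fst x) * v (snd x))" by auto
  have s': "(\<lambda>(x,y). u x * v y) summable_on (Sigma UNIV (\<lambda>_. UNIV))"
    using s unfolding eq by simp
  have "(\<Sum>\<^sub>\<infinity>x. u (fst x) * v (snd x)) = infsum (\<lambda>(x,y). u x * v y) (Sigma UNIV (\<lambda>_. UNIV))"
    unfolding eq by simp
  also have "\<dots> = (\<Sum>\<^sub>\<infinity>x. \<Sum>\<^sub>\<infinity>y. u x * v y)"
    using infsum_Sigma'_banach[OF s'] by simp
  also have "\<dots> = (\<Sum>\<^sub>\<infinity>x. u x * (\<Sum>\<^sub>\<infinity>y. v y))"
    using Infinite_Sum.abs_summable_summable[OF v] by (simp add: infsum_cmult_right)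
  also have "\<dots> = (\<Sum>\<^sub>\<infinity>a. u a) * (\<Sum>\<^sub>\<infinity>b. v b)"
    using Infinite_Sum.abs_summable_summable[OF u] by (simp add: infsum_cmult_left)
  finally show "(\<Sum>\<^sub>\<infinity>x. u (fst x) * v (snd x)) = (\<Sum>\<^sub>\<infinity>a. u a) * (\<Sum>\<^sub>\<infinity>b. v b)" .
qed

lemma tensor_apply: "tensor f g x = f (fst x) * g (snd x)"
  by (simp add: tensor_def case_prod_beta)

lemma sqs_tensor: assumes "sqs f" "sqs g" shows "sqs (tensor f g)"
proof -
  have u: "(\<lambda>a. norm (complex_of_real ((cmod (f a))^2))) summable_on UNIV"
    using assms(1) by (simp add: sqs_def norm_power)
  have v: "(\<lambda>a. norm (complex_of_real ((cmod (g a))^2))) summable_on UNIV"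
    using assms(2) by (simp add: sqs_def norm_power)
  have "(\<lambda>x. complex_of_real ((cmod (f (fst x)))^2) * complex_of_real ((cmod (g (snd x)))^2)) summable_on UNIV"
    by (rule prod_infsum(1)[OF u v])
  hence "(\<lambda>x. Re (complex_of_real ((cmod (f (fst x)))^2) * complex_of_real ((cmod (g (snd x)))^2))) summable_on UNIV"
    by (rule summable_on_Re)
  thus ?thesis by (simp add: sqs_def tensor_apply norm_mult power_mult_distrib)
qed

lemma l2_inner_tensor:
  assumes "sqs f" "sqs g" "sqs f'" "sqs g'"
  shows "l2_inner (tensor f g) (tensor f' g') = l2_inner f f' * l2_inner g g'"
proof -
  have "l2_inner (tensor f g) (tensor f' g') = (\<Sum>\<^sub>\<infinity>x. (f (fst x) * cnj (f' (fst x))) * (g (snd x) * cnj (g' (snd x))))"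
    unfolding l2_inner_def tensor_apply by (simp add: mult_ac)
  also have "\<dots> = l2_inner f f' * l2_inner g g'"
    unfolding l2_inner_def
    by (rule prod_infsum(2)) (use sqs_prod_abs assms in auto)
  finally show ?thesis .
qed

lemma tensor_l2: "f \<in> l2 I \<Longrightarrow> g \<in> l2 J \<Longrightarrow> tensor f g \<in> l2 (I \<times> J)"
  by (auto simp: l2_iff sqs_tensor tensor_apply)

lemma l2_norm_sqrt_inner: "sqs f \<Longrightarrow> l2_norm f = sqrt (Re (l2_inner f f))"
  by (simp add: l2_norm_def l2_inner_self)

lemma l2_norm_tensor: "sqs f \<Longrightarrow> sqs g \<Longrightarrow> l2_norm (tensor f g) = l2_norm f * l2_norm g"
proof -
  assume f: "sqs f" and g: "sqs g"
  have "l2_norm (tensor f g) = sqrt (Re (l2_inner f f * l2_inner g g))"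
    using f g by (simp add: l2_norm_sqrt_inner sqs_tensor l2_inner_tensor)
  also have "\<dots> = sqrt (Re (l2_inner f f)) * sqrt (Re (l2_inner g g))"
    using f g by (simp add: l2_inner_self real_sqrt_mult)
  finally show ?thesis using f g by (simp add: l2_norm_sqrt_inner)
qed

lemma tensor_diff_left: "tensor (\<lambda>a. f a - f' a) g = (\<lambda>x. tensor f g x - tensor f' g x)"
  by (simp add: tensor_apply fun_eq_iff algebra_simps)
lemma tensor_diff_right: "tensor g (\<lambda>a. f a - f' a) = (\<lambda>x. tensor g f x - tensor g f' x)"
  by (simp add: tensor_apply fun_eq_iff algebra_simps)
lemma tensor_add_left: "tensor (\<lambda>a. f a + f' a) g = (\<lambda>x. tensor f g x + tensor f' g x)"
  by (simp add: tensor_apply fun_eq_iff algebra_simps)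
lemma tensor_add_right: "tensor g (\<lambda>a. f a + f' a) = (\<lambda>x. tensor g f x + tensor g f' x)"
  by (simp add: tensor_apply fun_eq_iff algebra_simps)
lemma tensor_scale_left: "tensor (\<lambda>a. c * f a) g = (\<lambda>x. c * tensor f g x)"
  by (simp add: tensor_apply fun_eq_iff algebra_simps)
lemma tensor_scale_right: "tensor g (\<lambda>a. c * f a) = (\<lambda>x. c * tensor g f x)"
  by (simp add: tensor_apply fun_eq_iff algebra_simps)

lemma l2_inner_delta: "l2_inner q (\<lambda>x. if x = p then 1 else 0) = q p"
proof -
  have "l2_inner q (\<lambda>x. if x = p then 1 else 0) = infsum (\<lambda>x. q x * cnj (if x = p then 1 else 0)) {p}"
    unfolding l2_inner_def by (rule infsum_cong_neutral) auto
  thus ?thesis by simp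
qed

lemma delta_l2: "i \<in> I \<Longrightarrow> (\<lambda>a. if a = i then (1::complex) else 0) \<in> l2 I"
proof -
  assume i: "i \<in> I"
  have "(\<lambda>a. (cmod (if a = i then (1::complex) else 0))^2) summable_on {i}" by simp
  hence "(\<lambda>a. (cmod (if a = i then (1::complex) else 0))^2) summable_on UNIV"
    by (rule summable_on_cong_neutral[THEN iffD1, rotated -1]) auto
  thus ?thesis using i by (auto simp: l2_iff sqs_def)
qed

lemma orth_l2: "orth I X \<subseteq> l2 I"
  by (auto simp: orth_def)

lemma tensor_main:
  fixes C :: "('i \<Rightarrow> complex) set" and D :: "('j \<Rightarrow> complex) set"
  assumes C: "closed_subspace I C" and D: "closed_subspace J D" and w: "w \<in> l2 (I \<times> J)"
    and H1: "\<And>c y. c \<in> C \<Longrightarrow> y \<in> l2 J \<Longrightarrow> l2_inner w (tensor c y) = 0"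
    and H2: "\<And>x d. x \<in> l2 I \<Longrightarrow> d \<in> D \<Longrightarrow> l2_inner w (tensor x d) = 0"
  shows "w \<in> htensor I J (orth I C) (orth J D)"
proof -
  define Gen where "Gen = {tensor x y | x y. x \<in> orth I C \<and> y \<in> orth J D}"
  have CI: "C \<subseteq> l2 I" using C by (simp add: closed_subspace_def)
  have DJ: "D \<subseteq> l2 J" using D by (simp add: closed_subspace_def)
  have Gl2: "Gen \<subseteq> l2 (I \<times> J)"
  proof
    fix g assume "g \<in> Gen"
    then obtain x y where "g = tensor x y" "x \<in> orth I C" "y \<in> orth J D" unfolding Gen_def by blast
    thus "g \<in> l2 (I \<times> J)" using orth_l2[of I C] orth_l2[of J D] tensor_l2 by blast
  qed
  have W: "closed_subspace (I \<times> J) (cl_span (I \<times> J) Gen)" by (rule cl_span_closed[OF Gl2])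
  obtain p where p: "p \<in> cl_span (I \<times> J) Gen" and q: "(\<lambda>a. w a - p a) \<in> orth (I \<times> J) (cl_span (I \<times> J) Gen)"
    using proj_frozen[OF W w] by blast
  have pl2: "p \<in> l2 (I \<times> J)" using p cl_span_l2 by blast
  have sGen: "\<And>s. s \<in> Gen \<Longrightarrow> sqs s" using Gl2 l2_sqs by blast
  have p1: "l2_inner p (tensor c y) = 0" if c: "c \<in> C" and y: "y \<in> l2 J" for c y
  proof (rule cl_span_orth[OF _ _ p])
    show "sqs (tensor c y)" using c y CI by (blast intro: sqs_tensor l2_sqs)
    fix s assume s: "s \<in> Gen"
    then obtain x y' where s: "s = tensor x y'" and x: "x \<in> orth I C" and y': "y' \<in> orth J D"
      unfolding Gen_def by blast
    have "l2_inner s (tensor c y) = l2_inner x c * l2_inner y' y"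
      unfolding s using x y' c y CI orth_l2[of I C] orth_l2[of J D] by (intro l2_inner_tensor) (blast intro: l2_sqs)+
    also have "l2_inner x c = 0" using x c by (simp add: orth_def)
    finally show "sqs s \<and> l2_inner s (tensor c y) = 0" using sGen[OF \<open>s \<in> Gen\<close>] by simp
  qed
  have p2: "l2_inner p (tensor x d) = 0" if x: "x \<in> l2 I" and d: "d \<in> D" for x d
  proof (rule cl_span_orth[OF _ _ p])
    show "sqs (tensor x d)" using x d DJ by (blast intro: sqs_tensor l2_sqs)
    fix s assume s: "s \<in> Gen"
    then obtain x' y' where s: "s = tensor x' y'" and x': "x' \<in> orth I C" and y': "y' \<in> orth J D"
      unfolding Gen_def by blast
    have "l2_inner s (tensor x d) = l2_inner x' x * l2_inner y' d"
      unfolding s using x' y' x d DJ orth_l2[of I C] orth_l2[of J D] by (intro l2_inner_tensor) (blast intro: l2_sqs)+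
    also have "l2_inner y' d = 0" using y' d by (simp add: orth_def)
    finally show "sqs s \<and> l2_inner s (tensor x d) = 0" using sGen[OF \<open>s \<in> Gen\<close>] by simp
  qed
  have sw: "sqs w" using w l2_sqs by blast
  have sp: "sqs p" using pl2 l2_sqs by blast
  have qz: "w x - p x = 0" for x
  proof (cases "x \<in> I \<times> J")
    case False
    have "w x = 0" "p x = 0" using False w pl2 unfolding l2_def by blast+
    thus ?thesis by simp
  next
    case True
    then obtain i j where x: "x = (i, j)" and i: "i \<in> I" and j: "j \<in> J" by blast
    define ei where "ei = (\<lambda>a. if a = i then (1::complex) else 0)"
    define ej where "ej = (\<lambda>a. if a = j then (1::complex) else 0)"
    have ei: "ei \<in> l2 I" unfolding ei_def using i by (rule delta_l2)
    have ej: "ej \<in> l2 J" unfolding ej_def using j by (rule delta_l2)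
    obtain ci where ci: "ci \<in> C" and ai: "(\<lambda>a. ei a - ci a) \<in> orth I C" using proj_frozen[OF C ei] by blast
    obtain dj where dj: "dj \<in> D" and bj: "(\<lambda>a. ej a - dj a) \<in> orth J D" using proj_frozen[OF D ej] by blast
    define ai' where "ai' = (\<lambda>a. ei a - ci a)"
    define bj' where "bj' = (\<lambda>a. ej a - dj a)"
    have ai': "ai' \<in> orth I C" using ai by (simp add: ai'_def)
    have bj': "bj' \<in> orth J D" using bj by (simp add: bj'_def)
    have s_ci: "sqs ci" using ci CI l2_sqs by blast
    have s_dj: "sqs dj" using dj DJ l2_sqs by blast
    have s_ai: "sqs ai'" using ai' orth_l2 l2_sqs by blast
    have s_bj: "sqs bj'" using bj' orth_l2 l2_sqs by blast
    have s_ej: "sqs ej" using ej l2_sqs by blast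
    have ai_l2: "ai' \<in> l2 I" using ai' orth_l2 by blast
    have dec: "tensor ei ej = (\<lambda>x. tensor ci ej x + (tensor ai' dj x + tensor ai' bj' x))"
      by (simp add: fun_eq_iff tensor_apply ai'_def bj'_def algebra_simps)
    have delta: "tensor ei ej = (\<lambda>y. if y = (i, j) then 1 else 0)"
      by (auto simp: fun_eq_iff tensor_apply ei_def ej_def)
    define q where "q = (\<lambda>a. w a - p a)"
    have sq: "sqs q" unfolding q_def using sw sp by (rule sqs_minus)
    have "q (i, j) = l2_inner q (tensor ei ej)" unfolding delta by (simp add: l2_inner_delta)
    also have "\<dots> = l2_inner q (tensor ci ej) + (l2_inner q (tensor ai' dj) + l2_inner q (tensor ai' bj'))"
      unfolding dec using sq s_ci s_ej s_ai s_dj s_bj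
      by (simp add: l2_inner_add_right sqs_tensor sqs_add)
    also have "l2_inner q (tensor ci ej) = 0"
      unfolding q_def using sw sp s_ci s_ej H1[OF ci ej] p1[OF ci ej]
      by (simp add: l2_inner_minus_left sqs_tensor)
    also have "l2_inner q (tensor ai' dj) = 0"
      unfolding q_def using sw sp s_ai s_dj H2[OF ai_l2 dj] p2[OF ai_l2 dj]
      by (simp add: l2_inner_minus_left sqs_tensor)
    also have "l2_inner q (tensor ai' bj') = 0"
    proof -
      have "tensor ai' bj' \<in> Gen" unfolding Gen_def using ai' bj' by blast
      hence "tensor ai' bj' \<in> cl_span (I \<times> J) Gen" using S_cl_span[OF Gl2] by blast
      thus ?thesis using q unfolding q_def orth_def by blast
    qed
    finally show ?thesis unfolding x q_def by simp
  qed
  have "w = p" using qz by (simp add: fun_eq_iff)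
  thus ?thesis using p unfolding htensor_def Gen_def by simp
qed

lemma l2_sub_UNIV: "f \<in> l2 I \<Longrightarrow> f \<in> l2 UNIV"
  by (simp add: l2_UNIV l2_sqs)

lemma U_l2: "unitary_l2 I J U \<Longrightarrow> x \<in> l2 I \<Longrightarrow> U x \<in> l2 J"
  unfolding unitary_l2_def by blast
lemma U_surj: "unitary_l2 I J U \<Longrightarrow> y \<in> l2 J \<Longrightarrow> \<exists>x\<in>l2 I. U x = y"
  unfolding unitary_l2_def by (metis imageE)
lemma U_inner: "unitary_l2 I J U \<Longrightarrow> x \<in> l2 I \<Longrightarrow> y \<in> l2 I \<Longrightarrow> l2_inner (U x) (U y) = l2_inner x y"
  unfolding unitary_l2_def by blast
lemma U_scale: "unitary_l2 I J U \<Longrightarrow> x \<in> l2 I \<Longrightarrow> U (\<lambda>a. c * x a) = (\<lambda>b. c * U x b)"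
  unfolding unitary_l2_def by blast
lemma U_add: "unitary_l2 I J U \<Longrightarrow> x \<in> l2 I \<Longrightarrow> y \<in> l2 I \<Longrightarrow> U (\<lambda>a. x a + y a) = (\<lambda>b. U x b + U y b)"
  unfolding unitary_l2_def by blast

lemma l2_inner_self_zero: "sqs f \<Longrightarrow> l2_inner f f = 0 \<Longrightarrow> f = (\<lambda>a. 0)"
proof -
  assume f: "sqs f" and z: "l2_inner f f = 0"
  hence h: "(\<Sum>\<^sub>\<infinity>a. (cmod (f a))^2) = 0" by (simp add: l2_inner_self)
  have "(cmod (f a))^2 = 0" for a
    by (rule nonneg_infsum_le_0D[of _ UNIV]) (use h f[unfolded sqs_def] in auto)
  thus ?thesis by (simp add: fun_eq_iff)
qed

lemma U_inj:
  assumes U: "unitary_l2 I J U" and x: "x \<in> l2 I" and y: "y \<in> l2 I" and e: "U x = U y"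
  shows "x = y"
proof -
  define d where "d = (\<lambda>a. x a + (-1) * y a)"
  have my: "(\<lambda>a. (-1) * y a) \<in> l2 I" using y by (rule l2_scale)
  have d: "d \<in> l2 I" unfolding d_def using x my by (rule l2_add)
  have "U d = (\<lambda>b. U x b + U (\<lambda>a. (-1) * y a) b)" unfolding d_def using U x my by (rule U_add)
  also have "\<dots> = (\<lambda>b. 0)" using U_scale[OF U y, of "-1"] e by simp
  finally have Ud: "U d = (\<lambda>b. 0)" .
  have "l2_inner d d = 0" using U_inner[OF U d d] Ud by simp
  hence "d = (\<lambda>a. 0)" using l2_inner_self_zero d l2_sqs by blast
  thus ?thesis unfolding d_def by (simp add: fun_eq_iff)
qed

lemma slice_row: assumes h: "h \<in> l2 (I \<times> J)" shows "(\<lambda>b. h (a, b)) \<in> l2 J"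
proof -
  have s: "(\<lambda>x. (cmod (h x))^2) summable_on UNIV" using l2_sqs[OF h] by (simp add: sqs_def)
  hence "(\<lambda>x. (cmod (h x))^2) summable_on (Pair a ` UNIV)" by (rule summable_on_subset_banach) simp
  hence "((\<lambda>x. (cmod (h x))^2) \<circ> Pair a) summable_on UNIV"
    by (subst summable_on_reindex[symmetric]) (auto simp: inj_on_def)
  hence "sqs (\<lambda>b. h (a, b))" by (simp add: sqs_def o_def)
  moreover have "\<forall>b. b \<notin> J \<longrightarrow> h (a, b) = 0" using h by (auto simp: l2_def)
  ultimately show ?thesis by (simp add: l2_iff)
qed

lemma slice_col: assumes h: "h \<in> l2 (I \<times> J)" shows "(\<lambda>a. h (a, c)) \<in> l2 I"
proof -
  have s: "(\<lambda>x. (cmod (h x))^2) summable_on UNIV" using l2_sqs[OF h] by (simp add: sqs_def)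
  hence "(\<lambda>x. (cmod (h x))^2) summable_on ((\<lambda>a. (a, c)) ` UNIV)" by (rule summable_on_subset_banach) simp
  hence "((\<lambda>x. (cmod (h x))^2) \<circ> (\<lambda>a. (a, c))) summable_on UNIV"
    by (subst summable_on_reindex[symmetric]) (auto simp: inj_on_def)
  hence "sqs (\<lambda>a. h (a, c))" by (simp add: sqs_def o_def)
  moreover have "\<forall>a. a \<notin> I \<longrightarrow> h (a, c) = 0" using h by (auto simp: l2_def)
  ultimately show ?thesis by (simp add: l2_iff)
qed

lemma tensor_orth_htensor1:
  assumes x: "x \<in> orth I F" and y: "y \<in> l2 J" and F: "F \<subseteq> l2 I" and F': "F' \<subseteq> l2 J"
    and g: "g \<in> htensor I J F F'"
  shows "l2_inner g (tensor x y) = 0"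
proof (rule cl_span_orth[OF _ _ g[unfolded htensor_def]])
  have xl: "x \<in> l2 I" using x by (simp add: orth_def)
  show "sqs (tensor x y)" using xl y by (blast intro: sqs_tensor l2_sqs)
  fix s assume "s \<in> {tensor a b |a b. a \<in> F \<and> b \<in> F'}"
  then obtain a b where s: "s = tensor a b" and a: "a \<in> F" and b: "b \<in> F'" by blast
  have sa: "sqs a" and sb: "sqs b" using a b F F' l2_sqs by blast+
  have "l2_inner s (tensor x y) = l2_inner a x * l2_inner b y"
    unfolding s using sa sb xl y by (intro l2_inner_tensor) (blast intro: l2_sqs)+
  also have "l2_inner a x = 0" using x a l2_inner_cnj[of a x] by (simp add: orth_def)
  finally show "sqs s \<and> l2_inner s (tensor x y) = 0" using sa sb s by (simp add: sqs_tensor)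
qed

lemma tensor_orth_htensor2:
  assumes y: "y \<in> orth J F'" and x: "x \<in> l2 I" and F: "F \<subseteq> l2 I" and F': "F' \<subseteq> l2 J"
    and g: "g \<in> htensor I J F F'"
  shows "l2_inner g (tensor x y) = 0"
proof (rule cl_span_orth[OF _ _ g[unfolded htensor_def]])
  have yl: "y \<in> l2 J" using y by (simp add: orth_def)
  show "sqs (tensor x y)" using yl x by (blast intro: sqs_tensor l2_sqs)
  fix s assume "s \<in> {tensor a b |a b. a \<in> F \<and> b \<in> F'}"
  then obtain a b where s: "s = tensor a b" and a: "a \<in> F" and b: "b \<in> F'" by blast
  have sa: "sqs a" and sb: "sqs b" using a b F F' l2_sqs by blast+
  have "l2_inner s (tensor x y) = l2_inner a x * l2_inner b y"
    unfolding s using sa sb x yl by (intro l2_inner_tensor) (blast intro: l2_sqs)+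
  also have "l2_inner b y = 0" using y b l2_inner_cnj[of b y] by (simp add: orth_def)
  finally show "sqs s \<and> l2_inner s (tensor x y) = 0" using sa sb s by (simp add: sqs_tensor)
qed

lemma tensor_seq_closed:
  assumes "\<And>n. sqs (u n)" "sqs x" "sqs y" "sqs w" "(\<lambda>n. l2_norm (\<lambda>a. u n a - x a)) \<longlonglongrightarrow> 0"
  shows "(\<lambda>n. l2_inner w (tensor (u n) y)) \<longlonglongrightarrow> l2_inner w (tensor x y)"
    and "(\<lambda>n. l2_inner w (tensor y (u n))) \<longlonglongrightarrow> l2_inner w (tensor y x)"
proof -
  have a: "(\<lambda>n. l2_norm (\<lambda>a. u n a - x a) * l2_norm y) \<longlonglongrightarrow> 0"
    using tendsto_mult_left_zero[OF assms(5)] by simp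
  have b: "(\<lambda>n. l2_norm y * l2_norm (\<lambda>a. u n a - x a)) \<longlonglongrightarrow> 0"
    using tendsto_mult_right_zero[OF assms(5)] by simp
  show "(\<lambda>n. l2_inner w (tensor (u n) y)) \<longlonglongrightarrow> l2_inner w (tensor x y)"
  proof (rule l2_inner_cont(1))
    show "(\<lambda>n. l2_norm (\<lambda>a. tensor (u n) y a - tensor x y a)) \<longlonglongrightarrow> 0"
      using a assms by (simp add: tensor_diff_left[symmetric] l2_norm_tensor sqs_minus)
  qed (use assms in \<open>auto intro: sqs_tensor\<close>)
  show "(\<lambda>n. l2_inner w (tensor y (u n))) \<longlonglongrightarrow> l2_inner w (tensor y x)"
  proof (rule l2_inner_cont(1))
    show "(\<lambda>n. l2_norm (\<lambda>a. tensor y (u n) a - tensor y x a)) \<longlonglongrightarrow> 0"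
      using b assms by (simp add: tensor_diff_right[symmetric] l2_norm_tensor sqs_minus)
  qed (use assms in \<open>auto intro: sqs_tensor\<close>)
qed

lemma tensor_zero_left[simp]: "tensor (\<lambda>a. 0) y = (\<lambda>x. 0)"
  by (simp add: fun_eq_iff tensor_apply)
lemma tensor_zero_right[simp]: "tensor y (\<lambda>a. 0) = (\<lambda>x. 0)"
  by (simp add: fun_eq_iff tensor_apply)

theorem mainTheorem17:
  fixes E :: "real \<Rightarrow> 'i::countable set"
    and V :: "real \<Rightarrow> real \<Rightarrow> ('i \<Rightarrow> complex) \<Rightarrow> ('i \<times> 'i \<Rightarrow> complex)"
    and F1 F2 G G' :: "real \<Rightarrow> ('i \<Rightarrow> complex) set"
  assumes "product_system E V"
    and "inclusion_subsystem E V F1"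
    and "inclusion_subsystem E V F2"
  defines "G \<equiv> \<lambda>t. cl_span (E t) {z \<in> l2 (E t). \<exists>r x y. 0 < r \<and> r < t \<and>
              x \<in> orth (E r) (F1 r) \<and> y \<in> orth (E (t - r)) (F2 (t - r)) \<and>
              V r (t - r) z = tensor x y}"
    and "G' \<equiv> \<lambda>t. orth (E t) (G t)"
  shows "inclusion_subsystem E V G' \<and> (\<forall>t>0. F1 t \<subseteq> G' t \<and> F2 t \<subseteq> G' t)"
proof -
  define Sg where "Sg t = {z \<in> l2 (E t). \<exists>r x y. 0 < r \<and> r < t \<and>
              x \<in> orth (E r) (F1 r) \<and> y \<in> orth (E (t - r)) (F2 (t - r)) \<and>
              V r (t - r) z = tensor x y}" for t
  have G: "G t = cl_span (E t) (Sg t)" for t unfolding G_def Sg_def by simp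
  have PS: "(\<forall>s>0. \<forall>t>0. unitary_l2 (E (s + t)) (E s \<times> E t) (V s t)) \<and>
     (\<forall>r>0. \<forall>s>0. \<forall>t>0. \<forall>x\<in>l2 (E (r + s + t)). \<forall>a b c.
        op_tensor_id (V r s) (V (r + s) t x) ((a, b), c) =
        id_tensor_op (V s t) (V r (s + t) x) (a, (b, c)))"
    using assms(1) by (simp only: product_system_def)
  have U: "\<And>s t. 0 < s \<Longrightarrow> 0 < t \<Longrightarrow> unitary_l2 (E (s + t)) (E s \<times> E t) (V s t)"
    using conjunct1[OF PS] by simp
  have assoc: "\<And>r s t x a b c. 0 < r \<Longrightarrow> 0 < s \<Longrightarrow> 0 < t \<Longrightarrow> x \<in> l2 (E (r + s + t)) \<Longrightarrow>
        op_tensor_id (V r s) (V (r + s) t x) ((a, b), c) = id_tensor_op (V s t) (V r (s + t) x) (a, (b, c))"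
    using conjunct2[OF PS] by simp
  have IS1: "(\<forall>t>0. closed_subspace (E t) (F1 t)) \<and>
     (\<forall>s>0. \<forall>t>0. V s t ` F1 (s + t) \<subseteq> htensor (E s) (E t) (F1 s) (F1 t))"
    using assms(2) by (simp only: inclusion_subsystem_def)
  have IS2: "(\<forall>t>0. closed_subspace (E t) (F2 t)) \<and>
     (\<forall>s>0. \<forall>t>0. V s t ` F2 (s + t) \<subseteq> htensor (E s) (E t) (F2 s) (F2 t))"
    using assms(3) by (simp only: inclusion_subsystem_def)
  have F1c: "\<And>t. 0 < t \<Longrightarrow> closed_subspace (E t) (F1 t)" using conjunct1[OF IS1] by simp
  have F1i: "\<And>s t. 0 < s \<Longrightarrow> 0 < t \<Longrightarrow> V s t ` F1 (s + t) \<subseteq> htensor (E s) (E t) (F1 s) (F1 t)"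
    using conjunct2[OF IS1] by simp
  have F2c: "\<And>t. 0 < t \<Longrightarrow> closed_subspace (E t) (F2 t)" using conjunct1[OF IS2] by simp
  have F2i: "\<And>s t. 0 < s \<Longrightarrow> 0 < t \<Longrightarrow> V s t ` F2 (s + t) \<subseteq> htensor (E s) (E t) (F2 s) (F2 t)"
    using conjunct2[OF IS2] by simp
  have F1l: "\<And>t. 0 < t \<Longrightarrow> F1 t \<subseteq> l2 (E t)" using F1c by (simp add: closed_subspace_def)
  have F2l: "\<And>t. 0 < t \<Longrightarrow> F2 t \<subseteq> l2 (E t)" using F2c by (simp add: closed_subspace_def)
  have Sgl: "Sg t \<subseteq> l2 (E t)" for t unfolding Sg_def by blast
  have Gc: "closed_subspace (E t) (G t)" for t unfolding G by (rule cl_span_closed[OF Sgl])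
  have Gl: "G t \<subseteq> l2 UNIV" for t using Gc[of t] l2_sub_UNIV by (auto simp: closed_subspace_def)
  have G'c: "closed_subspace (E t) (G' t)" for t unfolding G'_def by (rule orth_closed[OF Gl])
  have Ur: "\<And>r t. 0 < r \<Longrightarrow> r < t \<Longrightarrow> unitary_l2 (E t) (E r \<times> E (t - r)) (V r (t - r))"
  proof -
    fix r t :: real assume "0 < r" "r < t"
    hence "unitary_l2 (E (r + (t - r))) (E r \<times> E (t - r)) (V r (t - r))" using U[of r "t - r"] by simp
    thus "unitary_l2 (E t) (E r \<times> E (t - r)) (V r (t - r))" by simp
  qed
  have part2: "F1 t \<subseteq> G' t \<and> F2 t \<subseteq> G' t" if t: "0 < t" for t
  proof -
    have main: "l2_inner z g = 0" if z: "z \<in> F1 t \<or> z \<in> F2 t" and g: "g \<in> G t" for z g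
    proof -
      have zl: "z \<in> l2 (E t)" using z F1l[OF t] F2l[OF t] by blast
      show ?thesis
      proof (rule cl_span_orth'[OF _ _ g[unfolded G]])
        show "sqs z" using zl by (rule l2_sqs)
        fix s assume s: "s \<in> Sg t"
        then obtain r x y where sl: "s \<in> l2 (E t)" and r: "0 < r" "r < t" and x: "x \<in> orth (E r) (F1 r)"
          and y: "y \<in> orth (E (t - r)) (F2 (t - r))" and Vs: "V r (t - r) s = tensor x y"
          unfolding Sg_def by blast
        have tr: "0 < t - r" using r by simp
        have Ut: "unitary_l2 (E t) (E r \<times> E (t - r)) (V r (t - r))" using Ur r by blast
        have "l2_inner s z = l2_inner (tensor x y) (V r (t - r) z)"
          using U_inner[OF Ut sl zl] Vs by simp
        also have "\<dots> = cnj (l2_inner (V r (t - r) z) (tensor x y))" by (rule l2_inner_cnj)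
        also have "l2_inner (V r (t - r) z) (tensor x y) = 0"
        proof (cases "z \<in> F1 t")
          case True
          have "V r (t - r) z \<in> htensor (E r) (E (t - r)) (F1 r) (F1 (t - r))"
            using F1i[OF r(1) tr] True by auto
          thus ?thesis using tensor_orth_htensor1[OF x _ F1l[OF r(1)] F1l[OF tr]] y
            by (auto simp: orth_def)
        next
          case False
          hence z2: "z \<in> F2 t" using z by blast
          have "V r (t - r) z \<in> htensor (E r) (E (t - r)) (F2 r) (F2 (t - r))"
            using F2i[OF r(1) tr] z2 by auto
          thus ?thesis using tensor_orth_htensor2[OF y _ F2l[OF r(1)] F2l[OF tr]] x
            by (auto simp: orth_def)
        qed
        finally show "sqs s \<and> l2_inner s z = 0" using sl l2_sqs by simp
      qed
    qed
    show ?thesis using main F1l[OF t] F2l[OF t] unfolding G'_def orth_def by blast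
  qed
  have part1: "V s t ` G' (s + t) \<subseteq> htensor (E s) (E t) (G' s) (G' t)" if s: "0 < s" and t: "0 < t" for s t
  proof
    fix w assume "w \<in> V s t ` G' (s + t)"
    then obtain z where z: "z \<in> G' (s + t)" and wz: "w = V s t z" by blast
    have Ust: "unitary_l2 (E (s + t)) (E s \<times> E t) (V s t)" using U s t by blast
    have zl: "z \<in> l2 (E (s + t))" using z by (simp add: G'_def orth_def)
    have zo: "\<And>g. g \<in> G (s + t) \<Longrightarrow> l2_inner z g = 0" using z by (simp add: G'_def orth_def)
    have zS: "\<And>g. g \<in> Sg (s + t) \<Longrightarrow> l2_inner z g = 0"
      using zo S_cl_span[OF Sgl] unfolding G by blast
    have wl: "w \<in> l2 (E s \<times> E t)" unfolding wz using U_l2[OF Ust zl] .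
    have sw: "sqs w" using wl by (rule l2_sqs)
    have key: "l2_inner w (V s t g) = 0" if g: "g \<in> Sg (s + t)" for g
    proof -
      have gl: "g \<in> l2 (E (s + t))" using g Sgl by blast
      show ?thesis unfolding wz using U_inner[OF Ust zl gl] zS[OF g] by simp
    qed
    have H1: "l2_inner w (tensor c y) = 0" if c: "c \<in> G s" and y: "y \<in> l2 (E t)" for c y
    proof -
      have sy: "sqs y" using y by (rule l2_sqs)
      have "G s \<subseteq> {c. sqs c \<and> l2_inner w (tensor c y) = 0}"
        unfolding G
      proof (rule cl_span_sub)
        show "(\<lambda>a. 0) \<in> {c. sqs c \<and> l2_inner w (tensor c y) = 0}"
          by simp
        show "(\<lambda>a. f a + g a) \<in> {c. sqs c \<and> l2_inner w (tensor c y) = 0}"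
          if "f \<in> {c. sqs c \<and> l2_inner w (tensor c y) = 0}" "g \<in> {c. sqs c \<and> l2_inner w (tensor c y) = 0}" for f g
          using that sy sw by (simp add: sqs_add tensor_add_left l2_inner_add_right sqs_tensor)
        show "(\<lambda>a. k * f a) \<in> {c. sqs c \<and> l2_inner w (tensor c y) = 0}"
          if "f \<in> {c. sqs c \<and> l2_inner w (tensor c y) = 0}" for k f
          using that by (simp add: sqs_scale tensor_scale_left l2_inner_scale_right)
        show "x \<in> {c. sqs c \<and> l2_inner w (tensor c y) = 0}"
          if u: "\<And>n. u n \<in> {c. sqs c \<and> l2_inner w (tensor c y) = 0}" and sx: "sqs x"
            and lim: "(\<lambda>n. l2_norm (\<lambda>a. u n a - x a)) \<longlonglongrightarrow> 0" for u x
        proof -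
          have "(\<lambda>n. l2_inner w (tensor (u n) y)) \<longlonglongrightarrow> l2_inner w (tensor x y)"
            using u sx sy sw lim by (intro tensor_seq_closed(1)) auto
          thus ?thesis using u sx lim_zero_const[of "\<lambda>n. l2_inner w (tensor (u n) y)"] by auto
        qed
        show "Sg s \<subseteq> {c. sqs c \<and> l2_inner w (tensor c y) = 0}"
        proof
          fix c assume cS: "c \<in> Sg s"
          then obtain r x y' where cl: "c \<in> l2 (E s)" and r: "0 < r" "r < s" and x: "x \<in> orth (E r) (F1 r)"
            and y': "y' \<in> orth (E (s - r)) (F2 (s - r))" and Vc: "V r (s - r) c = tensor x y'"
            unfolding Sg_def by blast
          have sr: "0 < s - r" using r by simp
          have xl: "x \<in> l2 (E r)" and y'l: "y' \<in> l2 (E (s - r))" using x y' by (auto simp: orth_def)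
          have Urs: "unitary_l2 (E s) (E r \<times> E (s - r)) (V r (s - r))" using Ur r by blast
          have Ust2: "unitary_l2 (E (s + t - r)) (E (s - r) \<times> E t) (V (s - r) t)"
            using U[OF sr t] by (simp add: algebra_simps)
          have Ur2: "unitary_l2 (E (s + t)) (E r \<times> E (s + t - r)) (V r (s + t - r))"
            using Ur[of r "s + t"] r t by simp
          obtain g where gl: "g \<in> l2 (E (s + t))" and Vg: "V s t g = tensor c y"
            using U_surj[OF Ust tensor_l2[OF cl y]] by blast
          obtain y'' where y''l: "y'' \<in> l2 (E (s + t - r))" and Vy'': "V (s - r) t y'' = tensor y' y"
            using U_surj[OF Ust2 tensor_l2[OF y'l y]] by blast
          have y''o: "y'' \<in> orth (E (s + t - r)) (F2 (s + t - r))"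
          proof -
            have "l2_inner y'' f = 0" if f: "f \<in> F2 (s + t - r)" for f
            proof -
              have "F2 (s - r + t) = F2 (s + t - r)" by (simp add: algebra_simps)
              hence "V (s - r) t f \<in> htensor (E (s - r)) (E t) (F2 (s - r)) (F2 t)"
                using F2i[OF sr t] f by auto
              hence o: "l2_inner (V (s - r) t f) (tensor y' y) = 0"
                using tensor_orth_htensor1[OF y' y F2l[OF sr] F2l[OF t]] by blast
              have fl: "f \<in> l2 (E (s + t - r))" using f F2l[of "s + t - r"] r t by auto
              have "l2_inner y'' f = l2_inner (tensor y' y) (V (s - r) t f)"
                using U_inner[OF Ust2 y''l fl] Vy'' by simp
              also have "\<dots> = cnj (l2_inner (V (s - r) t f) (tensor y' y))" by (rule l2_inner_cnj)
              finally show ?thesis using o by simp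
            qed
            thus ?thesis using y''l by (simp add: orth_def)
          qed
          define h where "h = V r (s + t - r) g"
          have hl: "h \<in> l2 (E r \<times> E (s + t - r))" unfolding h_def using U_l2[OF Ur2 gl] .
          have hrow: "(\<lambda>b. h (a, b)) = (\<lambda>b. x a * y'' b)" for a
          proof (rule U_inj[OF Ust2 slice_row[OF hl]])
            show "(\<lambda>b. x a * y'' b) \<in> l2 (E (s + t - r))" using y''l by (rule l2_scale)
            show "V (s - r) t (\<lambda>b. h (a, b)) = V (s - r) t (\<lambda>b. x a * y'' b)"
            proof
              fix p :: "'i \<times> 'i"
              obtain b cc where p: "p = (b, cc)" by (cases p)
              have e3: "r + (s - r) + t = s + t" and e1: "r + (s - r) = s" and e2: "s - r + t = s + t - r"
                by simp_all
              have A: "op_tensor_id (V r (s - r)) (V s t g) ((a, b), cc) = id_tensor_op (V (s - r) t) (V r (s + t - r) g) (a, (b, cc))"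
                using assoc[OF r(1) sr t, of g a b cc] gl unfolding e3 e1 e2 by simp
              have "op_tensor_id (V r (s - r)) (V s t g) ((a, b), cc) = V r (s - r) (\<lambda>a'. y cc * c a') (a, b)"
                unfolding Vg op_tensor_id_def by (simp add: tensor_apply mult.commute)
              also have "\<dots> = y cc * (x a * y' b)"
                using U_scale[OF Urs cl, of "y cc"] Vc by (simp add: tensor_apply)
              finally have L: "op_tensor_id (V r (s - r)) (V s t g) ((a, b), cc) = y cc * (x a * y' b)" .
              have R: "id_tensor_op (V (s - r) t) (V r (s + t - r) g) (a, (b, cc)) = V (s - r) t (\<lambda>b. h (a, b)) (b, cc)"
                unfolding id_tensor_op_def h_def by simp
              have "V (s - r) t (\<lambda>b. x a * y'' b) (b, cc) = x a * (y' b * y cc)"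
                using U_scale[OF Ust2 y''l, of "x a"] Vy'' by (simp add: tensor_apply)
              thus "V (s - r) t (\<lambda>b. h (a, b)) p = V (s - r) t (\<lambda>b. x a * y'' b) p"
                using A L R p by (simp add: mult_ac)
            qed
          qed
          have Vgr: "V r (s + t - r) g = tensor x y''"
            unfolding h_def[symmetric]
          proof
            fix p :: "'i \<times> 'i"
            obtain a b where p: "p = (a, b)" by (cases p)
            show "h p = tensor x y'' p" using fun_cong[OF hrow[of a], of b] p by (simp add: tensor_apply)
          qed
          have "g \<in> Sg (s + t)"
          proof -
            have "r < s + t" using r t by simp
            thus ?thesis unfolding Sg_def using gl r x y''o Vgr by blast
          qed
          hence "l2_inner w (V s t g) = 0" by (rule key)
          thus "c \<in> {c. sqs c \<and> l2_inner w (tensor c y) = 0}" using Vg cl l2_sqs by auto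
        qed
      qed
      thus ?thesis using c by blast
    qed
    have H2: "l2_inner w (tensor x d) = 0" if x: "x \<in> l2 (E s)" and d: "d \<in> G t" for x d
    proof -
      have sx: "sqs x" using x by (rule l2_sqs)
      have "G t \<subseteq> {d. sqs d \<and> l2_inner w (tensor x d) = 0}"
        unfolding G
      proof (rule cl_span_sub)
        show "(\<lambda>a. 0) \<in> {d. sqs d \<and> l2_inner w (tensor x d) = 0}"
          by simp
        show "(\<lambda>a. f a + g a) \<in> {d. sqs d \<and> l2_inner w (tensor x d) = 0}"
          if "f \<in> {d. sqs d \<and> l2_inner w (tensor x d) = 0}" "g \<in> {d. sqs d \<and> l2_inner w (tensor x d) = 0}" for f g
          using that sx sw by (simp add: sqs_add tensor_add_right l2_inner_add_right sqs_tensor)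
        show "(\<lambda>a. k * f a) \<in> {d. sqs d \<and> l2_inner w (tensor x d) = 0}"
          if "f \<in> {d. sqs d \<and> l2_inner w (tensor x d) = 0}" for k f
          using that by (simp add: sqs_scale tensor_scale_right l2_inner_scale_right)
        show "v \<in> {d. sqs d \<and> l2_inner w (tensor x d) = 0}"
          if u: "\<And>n. u n \<in> {d. sqs d \<and> l2_inner w (tensor x d) = 0}" and sv: "sqs v"
            and lim: "(\<lambda>n. l2_norm (\<lambda>a. u n a - v a)) \<longlonglongrightarrow> 0" for u v
        proof -
          have "(\<lambda>n. l2_inner w (tensor x (u n))) \<longlonglongrightarrow> l2_inner w (tensor x v)"
            using u sx sv sw lim by (intro tensor_seq_closed(2)) auto
          thus ?thesis using u sv lim_zero_const[of "\<lambda>n. l2_inner w (tensor x (u n))"] by auto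
        qed
        show "Sg t \<subseteq> {d. sqs d \<and> l2_inner w (tensor x d) = 0}"
        proof
          fix d assume dS: "d \<in> Sg t"
          then obtain r x' y' where dl: "d \<in> l2 (E t)" and r: "0 < r" "r < t" and x': "x' \<in> orth (E r) (F1 r)"
            and y': "y' \<in> orth (E (t - r)) (F2 (t - r))" and Vd: "V r (t - r) d = tensor x' y'"
            unfolding Sg_def by blast
          have tr: "0 < t - r" using r by simp
          have x'l: "x' \<in> l2 (E r)" using x' by (auto simp: orth_def)
          have Urt: "unitary_l2 (E t) (E r \<times> E (t - r)) (V r (t - r))" using Ur r by blast
          have Usr: "unitary_l2 (E (s + r)) (E s \<times> E r) (V s r)" using U[OF s r(1)] .
          have Ur2: "unitary_l2 (E (s + t)) (E (s + r) \<times> E (t - r)) (V (s + r) (t - r))"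
            using U[of "s + r" "t - r"] s r tr by simp
          obtain g where gl: "g \<in> l2 (E (s + t))" and Vg: "V s t g = tensor x d"
            using U_surj[OF Ust tensor_l2[OF x dl]] by blast
          obtain x'' where x''l: "x'' \<in> l2 (E (s + r))" and Vx'': "V s r x'' = tensor x x'"
            using U_surj[OF Usr tensor_l2[OF x x'l]] by blast
          have x''o: "x'' \<in> orth (E (s + r)) (F1 (s + r))"
          proof -
            have "l2_inner x'' f = 0" if f: "f \<in> F1 (s + r)" for f
            proof -
              have "V s r f \<in> htensor (E s) (E r) (F1 s) (F1 r)"
                using F1i[OF s r(1)] f by auto
              hence o: "l2_inner (V s r f) (tensor x x') = 0"
                using tensor_orth_htensor2[OF x' x F1l[OF s] F1l[OF r(1)]] by blast
              have fl: "f \<in> l2 (E (s + r))" using f F1l[of "s + r"] s r by auto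
              have "l2_inner x'' f = l2_inner (tensor x x') (V s r f)"
                using U_inner[OF Usr x''l fl] Vx'' by simp
              also have "\<dots> = cnj (l2_inner (V s r f) (tensor x x'))" by (rule l2_inner_cnj)
              finally show ?thesis using o by simp
            qed
            thus ?thesis using x''l by (simp add: orth_def)
          qed
          define h where "h = V (s + r) (t - r) g"
          have hl: "h \<in> l2 (E (s + r) \<times> E (t - r))" unfolding h_def using U_l2[OF Ur2 gl] .
          have hcol: "(\<lambda>a. h (a, cc)) = (\<lambda>a. y' cc * x'' a)" for cc
          proof (rule U_inj[OF Usr slice_col[OF hl]])
            show "(\<lambda>a. y' cc * x'' a) \<in> l2 (E (s + r))" using x''l by (rule l2_scale)
            show "V s r (\<lambda>a. h (a, cc)) = V s r (\<lambda>a. y' cc * x'' a)"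
            proof
              fix p :: "'i \<times> 'i"
              obtain a b where p: "p = (a, b)" by (cases p)
              have e3: "s + r + (t - r) = s + t" and e1: "r + (t - r) = t"
                by simp_all
              have A: "op_tensor_id (V s r) (V (s + r) (t - r) g) ((a, b), cc) = id_tensor_op (V r (t - r)) (V s t g) (a, (b, cc))"
                using assoc[OF s r(1) tr, of g a b cc] gl unfolding e3 e1 by simp
              have "id_tensor_op (V r (t - r)) (V s t g) (a, (b, cc)) = V r (t - r) (\<lambda>b'. x a * d b') (b, cc)"
                unfolding Vg id_tensor_op_def by (simp add: tensor_apply)
              also have "\<dots> = x a * (x' b * y' cc)"
                using U_scale[OF Urt dl, of "x a"] Vd by (simp add: tensor_apply)
              finally have R: "id_tensor_op (V r (t - r)) (V s t g) (a, (b, cc)) = x a * (x' b * y' cc)" .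
              have L: "op_tensor_id (V s r) (V (s + r) (t - r) g) ((a, b), cc) = V s r (\<lambda>a. h (a, cc)) (a, b)"
                unfolding op_tensor_id_def h_def by simp
              have "V s r (\<lambda>a. y' cc * x'' a) (a, b) = y' cc * (x a * x' b)"
                using U_scale[OF Usr x''l, of "y' cc"] Vx'' by (simp add: tensor_apply)
              thus "V s r (\<lambda>a. h (a, cc)) p = V s r (\<lambda>a. y' cc * x'' a) p"
                using A L R p by (simp add: mult_ac)
            qed
          qed
          have Vgr: "V (s + r) (t - r) g = tensor x'' y'"
            unfolding h_def[symmetric]
          proof
            fix p :: "'i \<times> 'i"
            obtain a b where p: "p = (a, b)" by (cases p)
            show "h p = tensor x'' y' p" using fun_cong[OF hcol[of b], of a] p by (simp add: tensor_apply mult.commute)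
          qed
          have e4: "s + t - (s + r) = t - r" by simp
          have "g \<in> Sg (s + t)"
          proof -
            have "0 < s + r" "s + r < s + t" using s r by simp_all
            moreover have "y' \<in> orth (E (s + t - (s + r))) (F2 (s + t - (s + r)))" using y' e4 by simp
            moreover have "V (s + r) (s + t - (s + r)) g = tensor x'' y'" using Vgr e4 by simp
            ultimately show ?thesis unfolding Sg_def using gl x''o by blast
          qed
          hence "l2_inner w (V s t g) = 0" by (rule key)
          thus "d \<in> {d. sqs d \<and> l2_inner w (tensor x d) = 0}" using Vg dl l2_sqs by auto
        qed
      qed
      thus ?thesis using d by blast
    qed
    have "w \<in> htensor (E s) (E t) (orth (E s) (G s)) (orth (E t) (G t))"
      by (rule tensor_main[OF Gc Gc wl H1 H2])
    thus "w \<in> htensor (E s) (E t) (G' s) (G' t)" unfolding G'_def by simp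
  qed
  have "inclusion_subsystem E V G'"
    unfolding inclusion_subsystem_def using G'c part1 by blast
  thus ?thesis using part2 by blast
qed

end
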